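(* Let $d\ge3$, $k,j\ge1$ and $C>0$. There exist $C'>0$ and a function $\epsilon:\mathbb N\to[0,1]$ with $\epsilon(N)\to0$ as $N\to\infty$, both depending only on $d,k,j,C$, such that the following holds. For every finite graph $G$ with all vertex degrees in $[3,d]$, $N$ vertices and girth $g\ge C\log N$, the probability (over the random labeling $\alpha$) that $\mu^\bullet_{G,\alpha}$ fails to effectively simulate $\mu^\bullet_X$ up to time $C'\log N$ is at most $\epsilon(N)$.
   Context: $\Gamma$ is the free group on a symmetric generating set $S$ of size $2k$, $X=\mathrm{Cay}(\Gamma,S)$ (a $2k$-regular tree), $\mu_X$ the standard random walk $\mu_X(x\to xs)=\frac1{2k}$, $\mu_X^n$ its convolution powers. $G=(V,E)$ finite graph, $\mu_G$ the standard random walk on $G$ (move to a uniform neighbour), $\nu_G(u)=\deg(u)/2|E|$ its stationary measure, and $\mu_G^q$ its $q$-step walk; for an oriented path $\vec p$ of length $q$ starting at $p_0$, $\mu_G^q(\vec p)$ is its probability under the walk started at $p_0$. The random labeling $\alpha$: for each edge independently, one orientation receives a uniformly random element of $S^j$ (a word of length $j$ in $S$, viewed in $\Gamma$) and the opposite orientation its inverse; for an oriented path $\vec p$, $\alpha(\vec p)$ is the product of labels along it. For $u,v$ with $d_G(u,v)<g/2$ and $x\in X$, $\beta_{u\to x}(v)=x\alpha(\vec p)$ with $\vec p$ the unique shortest path from $u$ to $v$. For $1\le q<g/2$: $\mu^q_{G,\alpha}(x\to x')=\sum_{\vec p}\nu_G(p_0)\mu_G^q(\vec p)\mathbf 1(x\alpha(\vec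 p)=x')$, the sum over oriented paths of length $q$ in $G$ (equivalently $\sum_u\nu_G(u)(\beta_{u\to x})_*\mu_G^q(u\to\cdot)$), and $\bar\mu^q(x\to x')$ is its expectation over $\alpha$. $\mu^\bullet_{G,\alpha}$ effectively simulates $\mu^\bullet_X$ up to time $q_0$ if $\mu^q_{G,\alpha}(x\to x')\ge\frac12\bar\mu^q(x\to x')$ for all integers $1\le q\le q_0$ and all $x,x'\in X$, and $\mu^1_{G,\alpha}(x\to x')\le2\mu_X^j(x\to x')$ for all $x,x'$. *)

theory Defs
  imports Complex_Main "HOL-Library.FuncSet"
begin

type_synonym letter = "nat \<times> bool"

text \<open>Generator i is (i,True), its inverse is (i,False); S = gens k has size 2k.\<close>
definition gens :: "nat \<Rightarrow> letter set" where
  "gens k = {(i, b). i < k}"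

fun linv :: "letter \<Rightarrow> letter" where
  "linv (i, b) = (i, \<not> b)"

definition winv :: "letter list \<Rightarrow> letter list" where
  "winv w = rev (map linv w)"

fun red :: "letter list \<Rightarrow> letter list" where
  "red [] = []"
| "red (a # w) = (case red w of [] \<Rightarrow> [a]
                  | b # w' \<Rightarrow> (if b = linv a then w' else a # b # w'))"

definition reduced :: "letter list \<Rightarrow> bool" where
  "reduced w = (\<forall>i. Suc i < length w \<longrightarrow> w ! Suc i \<noteq> linv (w ! i))"

text \<open>Elements of the free group Gamma (= vertices of the tree X).\<close>
definition FG :: "nat \<Rightarrow> letter list set" where
  "FG k = {w. set w \<subseteq> gens k \<and> reduced w}"

definition words :: "nat \<Rightarrow> nat \<Rightarrow> letter list set" where
  "words k j = {w. length w = j \<and> set w \<subseteq> gens k}"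

text \<open>j-step simple random walk on the Cayley tree: mu_X^j(x -> x').\<close>
definition muX :: "nat \<Rightarrow> nat \<Rightarrow> letter list \<Rightarrow> letter list \<Rightarrow> real" where
  "muX k j x x' = real (card {w \<in> words k j. red (x @ w) = x'}) / (2 * real k) ^ j"

definition simple_graph :: "nat set \<Rightarrow> (nat \<Rightarrow> nat \<Rightarrow> bool) \<Rightarrow> bool" where
  "simple_graph V E = (finite V \<and> (\<forall>u v. E u v \<longrightarrow> u \<in> V \<and> v \<in> V \<and> u \<noteq> v \<and> E v u))"

definition deg :: "nat set \<Rightarrow> (nat \<Rightarrow> nat \<Rightarrow> bool) \<Rightarrow> nat \<Rightarrow> nat" where
  "deg V E u = card {v \<in> V. E u v}"

text \<open>Edges, each represented once by its orientation (u,v) with u < v.\<close>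
definition oedges :: "nat set \<Rightarrow> (nat \<Rightarrow> nat \<Rightarrow> bool) \<Rightarrow> (nat \<times> nat) set" where
  "oedges V E = {(u, v). u \<in> V \<and> v \<in> V \<and> E u v \<and> u < v}"

definition is_cycle :: "nat set \<Rightarrow> (nat \<Rightarrow> nat \<Rightarrow> bool) \<Rightarrow> nat list \<Rightarrow> bool" where
  "is_cycle V E c = (3 \<le> length c \<and> distinct c \<and> set c \<subseteq> V \<and>
     (\<forall>i. Suc i < length c \<longrightarrow> E (c ! i) (c ! Suc i)) \<and> E (last c) (hd c))"

definition girth :: "nat set \<Rightarrow> (nat \<Rightarrow> nat \<Rightarrow> bool) \<Rightarrow> nat" where
  "girth V E = (LEAST n. \<exists>c. is_cycle V E c \<and> length c = n)"

text \<open>Oriented walks (paths of the random walk, backtracking allowed) of length q,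
  as vertex lists of length q+1.\<close>
definition walks :: "nat set \<Rightarrow> (nat \<Rightarrow> nat \<Rightarrow> bool) \<Rightarrow> nat \<Rightarrow> nat list set" where
  "walks V E q = {p. length p = Suc q \<and> set p \<subseteq> V \<and> (\<forall>i<q. E (p ! i) (p ! Suc i))}"

text \<open>nu_G(p_0) * mu_G^q(p) for a walk p of length q.\<close>
definition walk_weight :: "nat set \<Rightarrow> (nat \<Rightarrow> nat \<Rightarrow> bool) \<Rightarrow> nat list \<Rightarrow> real" where
  "walk_weight V E p =
     (real (deg V E (p ! 0)) / (2 * real (card (oedges V E)))) *
     (\<Prod>i<length p - 1. 1 / real (deg V E (p ! i)))"

text \<open>A labeling assigns to each edge, in its orientation u<v, a word in S^j; the opposite
  orientation gets the inverse. The sample space (uniform measure) is:\<close>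
definition labelings :: "nat \<Rightarrow> nat \<Rightarrow> nat set \<Rightarrow> (nat \<Rightarrow> nat \<Rightarrow> bool) \<Rightarrow>
    (nat \<times> nat \<Rightarrow> letter list) set" where
  "labelings k j V E = PiE (oedges V E) (\<lambda>_. words k j)"

definition elab :: "(nat \<times> nat \<Rightarrow> letter list) \<Rightarrow> nat \<Rightarrow> nat \<Rightarrow> letter list" where
  "elab \<alpha> u v = (if u < v then \<alpha> (u, v) else winv (\<alpha> (v, u)))"

definition plab :: "(nat \<times> nat \<Rightarrow> letter list) \<Rightarrow> nat list \<Rightarrow> letter list" where
  "plab \<alpha> p = concat (map (\<lambda>i. elab \<alpha> (p ! i) (p ! Suc i)) [0..<length p - 1])"

definition muGa :: "nat set \<Rightarrow> (nat \<Rightarrow> nat \<Rightarrow> bool) \<Rightarrow> (nat \<times> nat \<Rightarrow> letter list) \<Rightarrow>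
    nat \<Rightarrow> letter list \<Rightarrow> letter list \<Rightarrow> real" where
  "muGa V E \<alpha> q x x' =
     (\<Sum>p\<in>walks V E q. walk_weight V E p * (if red (x @ plab \<alpha> p) = x' then 1 else 0))"

definition mubar :: "nat \<Rightarrow> nat \<Rightarrow> nat set \<Rightarrow> (nat \<Rightarrow> nat \<Rightarrow> bool) \<Rightarrow>
    nat \<Rightarrow> letter list \<Rightarrow> letter list \<Rightarrow> real" where
  "mubar k j V E q x x' =
     (\<Sum>\<alpha>\<in>labelings k j V E. muGa V E \<alpha> q x x') / real (card (labelings k j V E))"

definition eff_sim :: "nat \<Rightarrow> nat \<Rightarrow> nat set \<Rightarrow> (nat \<Rightarrow> nat \<Rightarrow> bool) \<Rightarrow>
    (nat \<times> nat \<Rightarrow> letter list) \<Rightarrow> real \<Rightarrow> bool" where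
  "eff_sim k j V E \<alpha> q0 =
     ((\<forall>q::nat. 1 \<le> q \<and> real q \<le> q0 \<longrightarrow>
        (\<forall>x\<in>FG k. \<forall>x'\<in>FG k. muGa V E \<alpha> q x x' \<ge> mubar k j V E q x x' / 2)) \<and>
      (\<forall>x\<in>FG k. \<forall>x'\<in>FG k. muGa V E \<alpha> 1 x x' \<le> 2 * muX k j x x'))"

definition fail_prob :: "nat \<Rightarrow> nat \<Rightarrow> nat set \<Rightarrow> (nat \<Rightarrow> nat \<Rightarrow> bool) \<Rightarrow> real \<Rightarrow> real" where
  "fail_prob k j V E q0 =
     real (card {\<alpha> \<in> labelings k j V E. \<not> eff_sim k j V E \<alpha> q0}) /
     real (card (labelings k j V E))"

end

theory Submission
  imports Defs "HOL-Real_Asymp.Real_Asymp"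
begin
lemma linv_linv[simp]: "linv (linv a) = a" by (cases a) auto

lemma reduced_Nil[simp]: "reduced []" and reduced_single[simp]: "reduced [a]"
  by (auto simp: reduced_def)

lemma all_nat_split: "(\<forall>i::nat. Q i) \<longleftrightarrow> Q 0 \<and> (\<forall>i. Q (Suc i))"
  by (metis not0_implies_Suc)

lemma reduced_Cons2: "reduced (a # b # w) \<longleftrightarrow> b \<noteq> linv a \<and> reduced (b # w)"
  unfolding reduced_def by (subst all_nat_split) simp

lemma reduced_tl: "reduced (a # w) \<Longrightarrow> reduced w"
  by (cases w) (auto simp: reduced_Cons2)

lemma reduced_red: "reduced (red w)"
proof (induction w)
  case (Cons a w)
  then show ?case
    by (auto split: list.splits simp: reduced_Cons2 dest: reduced_tl)
qed simp

lemma red_reduced: "reduced w \<Longrightarrow> red w = w"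
proof (induction w)
  case (Cons a w)
  then have "red w = w" using reduced_tl by blast
  then show ?case using Cons.prems by (cases w) (auto simp: reduced_Cons2)
qed simp

lemma red_red[simp]: "red (red w) = red w"
  using red_reduced reduced_red by blast

lemma red_append: "red (a @ b) = red (a @ red b)"
  by (induction a) auto

lemma red_cancel: "red (linv c # c # v) = red v"
proof -
  have R: "reduced (red v)" by (rule reduced_red)
  show ?thesis
  proof (cases "red v")
    case Nil then show ?thesis by simp
  next
    case (Cons b w')
    show ?thesis
    proof (cases "b = linv c")
      case True
      then show ?thesis using Cons R
        by (cases w') (auto simp: reduced_Cons2)
    next
      case False
      then show ?thesis using Cons by simp
    qed
  qed
qed

lemma winv_Nil[simp]: "winv [] = []" by (simp add: winv_def)
lemma winv_Cons[simp]: "winv (c # x) = winv x @ [linv c]" by (simp add: winv_def)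
lemma winv_append: "winv (a @ b) = winv b @ winv a" by (simp add: winv_def)
lemma winv_winv[simp]: "winv (winv x) = x"
  by (simp add: winv_def rev_map comp_def)
lemma length_winv[simp]: "length (winv x) = length x" by (simp add: winv_def)
lemma set_winv: "set (winv x) = linv ` set x" by (simp add: winv_def)

lemma red_winv_cancel: "red (winv x @ x @ v) = red v"
proof (induction x arbitrary: v)
  case (Cons c x)
  have "red (winv (c # x) @ (c # x) @ v) = red (winv x @ (linv c # c # x @ v))" by simp
  also have "\<dots> = red (winv x @ red (linv c # c # x @ v))" by (rule red_append)
  also have "\<dots> = red (winv x @ red (x @ v))" by (subst red_cancel) (rule refl)
  also have "\<dots> = red (winv x @ x @ v)" by (simp add: red_append[symmetric])
  finally show ?case using Cons by simp
qed simp

lemma red_winv_cancel2: "red (x @ winv x @ v) = red v"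
  using red_winv_cancel[of "winv x" v] by simp

lemma red_key: "reduced x' \<Longrightarrow> (red (x @ w) = x') \<longleftrightarrow> (red w = red (winv x @ x'))"
proof
  assume "red (x @ w) = x'"
  then have "red (winv x @ x') = red (winv x @ red (x @ w))" by simp
  also have "\<dots> = red (winv x @ x @ w)" by (simp add: red_append[symmetric])
  finally show "red w = red (winv x @ x')" by (simp add: red_winv_cancel)
next
  assume r: "reduced x'" and "red w = red (winv x @ x')"
  then have "red (x @ w) = red (x @ red (winv x @ x'))" by (simp add: red_append[of x w])
  also have "\<dots> = red (x @ winv x @ x')" by (simp add: red_append[symmetric])
  also have "\<dots> = x'" using r by (simp add: red_winv_cancel2 red_reduced)
  finally show "red (x @ w) = x'" .
qed

lemma card_gens: "card (gens k) = 2 * k"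
proof -
  have "gens k = {..<k} \<times> (UNIV :: bool set)" by (auto simp: gens_def)
  then show ?thesis by (simp add: card_cartesian_product)
qed

lemma finite_gens[simp]: "finite (gens k)"
proof -
  have "gens k = {..<k} \<times> (UNIV :: bool set)" by (auto simp: gens_def)
  then show ?thesis by simp
qed

lemma words_eq: "words k j = {xs. set xs \<subseteq> gens k \<and> length xs = j}"
  by (auto simp: words_def)

lemma finite_words[simp]: "finite (words k j)"
  unfolding words_eq by (rule finite_lists_length_eq) simp

lemma card_words: "card (words k j) = (2 * k) ^ j"
  unfolding words_eq by (simp add: card_lists_length_eq card_gens)

lemma linv_gens: "a \<in> gens k \<Longrightarrow> linv a \<in> gens k"
  by (cases a) (auto simp: gens_def)

lemma winv_words: "w \<in> words k j \<Longrightarrow> winv w \<in> words k j"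
  by (auto simp: words_def set_winv gens_def)

definition merge :: "'i set \<Rightarrow> ('i \<Rightarrow> 'a) \<Rightarrow> ('i \<Rightarrow> 'a) \<Rightarrow> 'i \<Rightarrow> 'a" where
  "merge A \<beta> \<gamma> = (\<lambda>i. if i \<in> A then \<beta> i else \<gamma> i)"

lemma merge_PiE: "A \<subseteq> I \<Longrightarrow> \<beta> \<in> PiE A (\<lambda>_. W) \<Longrightarrow> \<gamma> \<in> PiE (I - A) (\<lambda>_. W) \<Longrightarrow>
   merge A \<beta> \<gamma> \<in> PiE I (\<lambda>_. W)"
  by (auto simp: merge_def PiE_def extensional_def)

lemma t1: "A \<subseteq> I \<Longrightarrow> (\<lambda>\<alpha>. (restrict \<alpha> A, restrict \<alpha> (I - A))) \<in> PiE I (\<lambda>_. W) \<rightarrow> PiE A (\<lambda>_. W) \<times> PiE (I - A) (\<lambda>_. W)"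
  by (auto simp: PiE_def extensional_def Pi_def)

lemma t2: "y \<in> PiE I (\<lambda>_. W) \<Longrightarrow> A \<subseteq> I \<Longrightarrow> merge A (restrict y A) (restrict y (I - A)) = y"
  by (auto simp: merge_def PiE_def extensional_def fun_eq_iff)

lemma t3: "\<beta> \<in> PiE A (\<lambda>_. W) \<Longrightarrow> restrict (merge A \<beta> \<gamma>) A = \<beta>"
  by (auto simp: merge_def restrict_def PiE_def extensional_def)
lemma t4: "\<gamma> \<in> PiE (I - A) (\<lambda>_. W) \<Longrightarrow> restrict (merge A \<beta> \<gamma>) (I - A) = \<gamma>"
  by (auto simp: merge_def restrict_def PiE_def extensional_def)
lemma PiE_split_bij:
  assumes "A \<subseteq> I"
  shows "bij_betw (\<lambda>(\<beta>, \<gamma>). merge A \<beta> \<gamma>) (PiE A (\<lambda>_. W) \<times> PiE (I - A) (\<lambda>_. W)) (PiE I (\<lambda>_. W))"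
proof (rule bij_betwI[where g = "\<lambda>\<alpha>. (restrict \<alpha> A, restrict \<alpha> (I - A))"])
  show "(\<lambda>(\<beta>, \<gamma>). merge A \<beta> \<gamma>) \<in> PiE A (\<lambda>_. W) \<times> PiE (I - A) (\<lambda>_. W) \<rightarrow> PiE I (\<lambda>_. W)"
  proof
    fix x assume "x \<in> PiE A (\<lambda>_. W) \<times> PiE (I - A) (\<lambda>_. W)"
    then show "(case x of (\<beta>, \<gamma>) \<Rightarrow> merge A \<beta> \<gamma>) \<in> PiE I (\<lambda>_. W)"
      using merge_PiE[OF assms, of _ W] by (cases x) auto
  qed
  show "(\<lambda>\<alpha>. (restrict \<alpha> A, restrict \<alpha> (I - A))) \<in> PiE I (\<lambda>_. W) \<rightarrow> PiE A (\<lambda>_. W) \<times> PiE (I - A) (\<lambda>_. W)"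
    using assms by (rule t1)
  fix x assume "x \<in> PiE A (\<lambda>_. W) \<times> PiE (I - A) (\<lambda>_. W)"
  then obtain \<beta> \<gamma> where x: "x = (\<beta>, \<gamma>)" "\<beta> \<in> PiE A (\<lambda>_. W)" "\<gamma> \<in> PiE (I - A) (\<lambda>_. W)" by blast
  show "(\<lambda>\<alpha>. (restrict \<alpha> A, restrict \<alpha> (I - A))) (case x of (\<beta>, \<gamma>) \<Rightarrow> merge A \<beta> \<gamma>) = x"
    using x t3[OF x(2)] t4[OF x(3)] by simp
next
  fix y assume "y \<in> PiE I (\<lambda>_. W)"
  then show "(case (restrict y A, restrict y (I - A)) of (\<beta>, \<gamma>) \<Rightarrow> merge A \<beta> \<gamma>) = y"
    using t2 assms by simp
qed

lemma sum_PiE_split: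
  assumes "A \<subseteq> I"
  shows "(\<Sum>\<alpha>\<in>PiE I (\<lambda>_. W). h \<alpha>) = (\<Sum>\<beta>\<in>PiE A (\<lambda>_. W). \<Sum>\<gamma>\<in>PiE (I - A) (\<lambda>_. W). h (merge A \<beta> \<gamma>))"
proof -
  have "(\<Sum>\<alpha>\<in>PiE I (\<lambda>_. W). h \<alpha>) = (\<Sum>x\<in>PiE A (\<lambda>_. W) \<times> PiE (I - A) (\<lambda>_. W). h ((\<lambda>(\<beta>, \<gamma>). merge A \<beta> \<gamma>) x))"
    using sum.reindex_bij_betw[OF PiE_split_bij[OF assms], of h] by simp
  also have "\<dots> = (\<Sum>\<beta>\<in>PiE A (\<lambda>_. W). \<Sum>\<gamma>\<in>PiE (I - A) (\<lambda>_. W). h (merge A \<beta> \<gamma>))"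
    by (simp add: sum.cartesian_product split_def)
  finally show ?thesis .
qed

lemma card_PiE_split:
  assumes "finite I" "A \<subseteq> I"
  shows "card (PiE I (\<lambda>_. W)) = card (PiE A (\<lambda>_. W)) * card (PiE (I - A) (\<lambda>_. W))"
  using bij_betw_same_card[OF PiE_split_bij[OF assms(2), of W]] card_cartesian_product by metis

lemma mult_aux: "((b::real) * x) * (a * y) = (x * y) * (a * b)" by simp

lemma indep_sum:
  fixes f g :: "('i \<Rightarrow> 'a) \<Rightarrow> real"
  assumes I: "finite I" "A \<subseteq> I" "B \<subseteq> I" "A \<inter> B = {}" and W: "W \<noteq> {}"
    and f: "\<And>\<alpha> \<alpha>'. \<alpha> \<in> PiE I (\<lambda>_. W) \<Longrightarrow> \<alpha>' \<in> PiE I (\<lambda>_. W) \<Longrightarrow> (\<forall>i\<in>A. \<alpha> i = \<alpha>' i) \<Longrightarrow> f \<alpha> = f \<alpha>'"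
    and g: "\<And>\<alpha> \<alpha>'. \<alpha> \<in> PiE I (\<lambda>_. W) \<Longrightarrow> \<alpha>' \<in> PiE I (\<lambda>_. W) \<Longrightarrow> (\<forall>i\<in>B. \<alpha> i = \<alpha>' i) \<Longrightarrow> g \<alpha> = g \<alpha>'"
  shows "(\<Sum>\<alpha>\<in>PiE I (\<lambda>_. W). f \<alpha> * g \<alpha>) * card (PiE I (\<lambda>_. W)) =
         (\<Sum>\<alpha>\<in>PiE I (\<lambda>_. W). f \<alpha>) * (\<Sum>\<alpha>\<in>PiE I (\<lambda>_. W). g \<alpha>)"
proof -
  let ?PA = "PiE A (\<lambda>_. W)" and ?PB = "PiE (I - A) (\<lambda>_. W)"
  obtain \<beta>0 where b0: "\<beta>0 \<in> ?PA" using W by (metis PiE_eq_empty_iff ex_in_conv)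
  obtain \<gamma>0 where g0: "\<gamma>0 \<in> ?PB" using W by (metis PiE_eq_empty_iff ex_in_conv)
  define F where "F \<beta> = f (merge A \<beta> \<gamma>0)" for \<beta>
  define G where "G \<gamma> = g (merge A \<beta>0 \<gamma>)" for \<gamma>
  have FF: "f (merge A \<beta> \<gamma>) = F \<beta>" if "\<beta> \<in> ?PA" "\<gamma> \<in> ?PB" for \<beta> \<gamma>
    unfolding F_def by (rule f) (use that g0 I in \<open>auto intro: merge_PiE simp: merge_def\<close>)
  have GG: "g (merge A \<beta> \<gamma>) = G \<gamma>" if "\<beta> \<in> ?PA" "\<gamma> \<in> ?PB" for \<beta> \<gamma>
    unfolding G_def by (rule g) (use that b0 I in \<open>auto intro: merge_PiE simp: merge_def\<close>)
  have 1: "(\<Sum>\<alpha>\<in>PiE I (\<lambda>_. W). f \<alpha> * g \<alpha>) = (\<Sum>\<beta>\<in>?PA. F \<beta>) * (\<Sum>\<gamma>\<in>?PB. G \<gamma>)"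
    unfolding sum_PiE_split[OF I(2)] sum_product by (intro sum.cong refl) (simp add: FF GG)
  have 2: "(\<Sum>\<alpha>\<in>PiE I (\<lambda>_. W). f \<alpha>) = card ?PB * (\<Sum>\<beta>\<in>?PA. F \<beta>)"
    unfolding sum_PiE_split[OF I(2)] by (simp add: FF sum_distrib_left[symmetric])
  have 3: "(\<Sum>\<alpha>\<in>PiE I (\<lambda>_. W). g \<alpha>) = card ?PA * (\<Sum>\<gamma>\<in>?PB. G \<gamma>)"
    unfolding sum_PiE_split[OF I(2)] by (simp add: GG sum_distrib_left[symmetric])
  have 4: "card (PiE I (\<lambda>_. W)) = card ?PA * card ?PB" by (rule card_PiE_split[OF I(1,2)])
  show ?thesis
    unfolding 1 2 3 4 of_nat_mult by (rule sym) (rule mult_aux)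
qed

lemma card_agree:
  assumes "finite I" "A \<subseteq> I" "\<beta> \<in> PiE A (\<lambda>_. W)" "finite W"
  shows "card {\<alpha> \<in> PiE I (\<lambda>_. W). \<forall>i\<in>A. \<alpha> i = \<beta> i} * card (PiE A (\<lambda>_. W)) = card (PiE I (\<lambda>_. W))"
proof -
  let ?PA = "PiE A (\<lambda>_. W)" and ?PB = "PiE (I - A) (\<lambda>_. W)"
  have fin: "finite (PiE I (\<lambda>_. W))"
    using assms by (simp add: finite_PiE)
  have finA: "finite ?PA" using assms finite_subset by (auto intro!: finite_PiE)
  have eq: "(\<forall>i\<in>A. merge A \<beta>' \<gamma> i = \<beta> i) \<longleftrightarrow> \<beta>' = \<beta>" if "\<beta>' \<in> ?PA" for \<beta>' \<gamma>
    using that assms(3) by (auto simp: merge_def PiE_def extensional_def fun_eq_iff)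
  have "card {\<alpha> \<in> PiE I (\<lambda>_. W). \<forall>i\<in>A. \<alpha> i = \<beta> i} = (\<Sum>\<alpha>\<in>PiE I (\<lambda>_. W). if \<forall>i\<in>A. \<alpha> i = \<beta> i then 1 else 0)"
    using sum.inter_filter[OF fin, of "\<lambda>_. 1::nat"] by simp
  also have "\<dots> = (\<Sum>\<beta>'\<in>?PA. \<Sum>\<gamma>\<in>?PB. if \<beta>' = \<beta> then 1 else 0)"
    unfolding sum_PiE_split[OF assms(2)] by (intro sum.cong refl) (simp add: eq)
  also have "\<dots> = card ?PB"
    using assms(3) finA by (simp add: sum_distrib_left[symmetric] sum.delta)
  moreover have "card (PiE I (\<lambda>_. W)) = card ?PA * card ?PB" by (rule card_PiE_split[OF assms(1,2)])
  ultimately show ?thesis by simp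
qed

lemma card_PiE_const: "finite A \<Longrightarrow> card (PiE A (\<lambda>_. W)) = card W ^ card A"
  by (simp add: card_PiE)

lemma sum_PiE_single:
  fixes g :: "'a \<Rightarrow> real"
  assumes "finite I" "e \<in> I" "finite W"
  shows "(\<Sum>\<alpha>\<in>PiE I (\<lambda>_. W). g (\<alpha> e)) * card W = card (PiE I (\<lambda>_. W)) * (\<Sum>s\<in>W. g s)"
proof -
  let ?PA = "PiE {e} (\<lambda>_. W)" and ?PB = "PiE (I - {e}) (\<lambda>_. W)"
  have bij: "bij_betw (\<lambda>\<beta>. \<beta> e) ?PA W"
    by (rule bij_betwI[where g = "\<lambda>s. (\<lambda>i. if i = e then s else undefined)"])
       (auto simp: PiE_def extensional_def fun_eq_iff)
  have s1: "(\<Sum>\<beta>\<in>?PA. g (\<beta> e)) = (\<Sum>s\<in>W. g s)"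
    using sum.reindex_bij_betw[OF bij, of g] by simp
  have cA: "card ?PA = card W" using bij_betw_same_card[OF bij] .
  have "(\<Sum>\<alpha>\<in>PiE I (\<lambda>_. W). g (\<alpha> e)) = (\<Sum>\<beta>\<in>?PA. \<Sum>\<gamma>\<in>?PB. g (\<beta> e))"
    by (subst sum_PiE_split[of "{e}" I]) (use assms(2) in \<open>auto simp: merge_def\<close>)
  also have "\<dots> = card ?PB * (\<Sum>s\<in>W. g s)"
    by (simp add: s1 sum_distrib_left[symmetric])
  moreover have "card (PiE I (\<lambda>_. W)) = card ?PA * card ?PB"
    by (rule card_PiE_split[OF assms(1)]) (use assms(2) in auto)
  ultimately show ?thesis using cA by simp
qed

lemma sg_E: "simple_graph V E \<Longrightarrow> E u v \<Longrightarrow> u \<in> V \<and> v \<in> V \<and> u \<noteq> v \<and> E v u"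
  by (auto simp: simple_graph_def)

lemma sg_finite: "simple_graph V E \<Longrightarrow> finite V"
  by (simp add: simple_graph_def)

lemma deg_notin: "simple_graph V E \<Longrightarrow> u \<notin> V \<Longrightarrow> deg V E u = 0"
proof -
  assume "simple_graph V E" "u \<notin> V"
  then have "{v \<in> V. E u v} = {}" using sg_E by blast
  then show ?thesis unfolding deg_def by (metis card.empty)
qed

lemma last_len: "length p = Suc q \<Longrightarrow> last p = p ! q"
  by (subst last_conv_nth) auto

lemma deg_sym: "simple_graph V E \<Longrightarrow> card {u \<in> V. E u v} = deg V E v"
  unfolding deg_def using sg_E by metis

lemma finite_oedges: "simple_graph V E \<Longrightarrow> finite (oedges V E)"
proof -
  assume "simple_graph V E"
  then have "oedges V E \<subseteq> V \<times> V" "finite V" by (auto simp: oedges_def simple_graph_def)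
  then show ?thesis using finite_subset by blast
qed

lemma handshake:
  assumes G: "simple_graph V E"
  shows "(\<Sum>u\<in>V. deg V E u) = 2 * card (oedges V E)"
proof -
  let ?D = "{(u, v). E u v}"
  have fV: "finite V" using G by (simp add: simple_graph_def)
  have D1: "?D = Sigma V (\<lambda>u. {v \<in> V. E u v})" using sg_E[OF G] by auto
  have "card ?D = (\<Sum>u\<in>V. deg V E u)"
    unfolding D1 deg_def using fV by (simp add: card_SigmaI)
  moreover have D2: "?D = oedges V E \<union> prod.swap ` oedges V E"
  proof
    show "?D \<subseteq> oedges V E \<union> prod.swap ` oedges V E"
    proof
      fix x assume "x \<in> ?D"
      then obtain u v where x: "x = (u, v)" "E u v" by blast
      then have "u \<in> V" "v \<in> V" "u \<noteq> v" "E v u" using sg_E[OF G] by auto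
      then show "x \<in> oedges V E \<union> prod.swap ` oedges V E"
        using x by (cases "u < v") (auto simp: oedges_def image_iff intro!: bexI[of _ "(v, u)"])
    qed
    show "oedges V E \<union> prod.swap ` oedges V E \<subseteq> ?D"
      using sg_E[OF G] by (auto simp: oedges_def)
  qed
  have "card (oedges V E \<union> prod.swap ` oedges V E) = card (oedges V E) + card (prod.swap ` oedges V E)"
    apply (rule card_Un_disjoint) using finite_oedges[OF G] apply auto[2] by (auto simp: oedges_def)
  moreover have "card (prod.swap ` oedges V E) = card (oedges V E)"
    by (rule card_image) (auto simp: inj_on_def)
  ultimately show ?thesis using D2 by simp
qed

lemma walks_0: "walks V E 0 = (\<lambda>u. [u]) ` V"
proof
  show "walks V E 0 \<subseteq> (\<lambda>u. [u]) ` V"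
  proof
    fix p assume "p \<in> walks V E 0"
    then obtain u where "p = [u]" "u \<in> V" by (auto simp: walks_def length_Suc_conv)
    then show "p \<in> (\<lambda>u. [u]) ` V" by blast
  qed
qed (auto simp: walks_def)

lemma walks_Suc: "walks V E (Suc q) = (\<lambda>(p, z). p @ [z]) ` (SIGMA p:walks V E q. {z \<in> V. E (last p) z})"
proof
  show "walks V E (Suc q) \<subseteq> (\<lambda>(p, z). p @ [z]) ` (SIGMA p:walks V E q. {z \<in> V. E (last p) z})"
  proof
    fix p' assume p': "p' \<in> walks V E (Suc q)"
    then have len: "length p' = Suc (Suc q)" by (simp add: walks_def)
    define p where "p = butlast p'"
    define z where "z = last p'"
    have eq: "p' = p @ [z]" using len unfolding p_def z_def
      by (metis append_butlast_last_id list.size(3) nat.distinct(1))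
    have lp: "length p = Suc q" using len by (simp add: p_def)
    have nth: "p' ! i = p ! i" if "i < Suc q" for i using that eq lp by (simp add: nth_append)
    have "E (p ! i) (p ! Suc i)" if "i < q" for i
    proof -
    have "E (p' ! i) (p' ! Suc i)" using p' that by (simp add: walks_def)
    then show ?thesis using that nth[of i] nth[of "Suc i"] by simp
  qed
    then have "p \<in> walks V E q"
      using p' lp unfolding walks_def by (auto simp: eq)
    moreover have "z \<in> V" using p' by (auto simp: walks_def eq)
    moreover have "E (last p) z"
    proof -
      have "E (p' ! q) (p' ! Suc q)" using p' by (simp add: walks_def)
      moreover have "p' ! Suc q = z" using eq lp by (simp add: nth_append)
      moreover have "p' ! q = last p" using nth[of q] last_len[OF lp] by simp
      ultimately show ?thesis by simp
    qed
    ultimately show "p' \<in> (\<lambda>(p, z). p @ [z]) ` (SIGMA p:walks V E q. {z \<in> V. E (last p) z})"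
      using eq by force
  qed
  show "(\<lambda>(p, z). p @ [z]) ` (SIGMA p:walks V E q. {z \<in> V. E (last p) z}) \<subseteq> walks V E (Suc q)"
  proof clarify
    fix p z assume p: "p \<in> walks V E q" and z: "z \<in> V" "E (last p) z"
    have lp: "length p = Suc q" using p by (simp add: walks_def)
    have "E ((p @ [z]) ! i) ((p @ [z]) ! Suc i)" if "i < Suc q" for i
    proof (cases "i < q")
      case True then show ?thesis using p lp by (simp add: walks_def nth_append)
    next
      case False
      then have "i = q" using that by simp
      then show ?thesis using z lp last_len[OF lp] by (simp add: nth_append)
    qed
    then show "p @ [z] \<in> walks V E (Suc q)" using p z lp by (auto simp: walks_def)
  qed
qed

lemma inj_snoc: "inj_on (\<lambda>(p, z). p @ [z]) X"
  by (auto simp: inj_on_def)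

lemma finite_walks: "finite V \<Longrightarrow> finite (walks V E q)"
proof -
  assume "finite V"
  then have "finite {p. set p \<subseteq> V \<and> length p = Suc q}" by (rule finite_lists_length_eq)
  moreover have "walks V E q \<subseteq> {p. set p \<subseteq> V \<and> length p = Suc q}" by (auto simp: walks_def)
  ultimately show ?thesis using finite_subset by blast
qed

lemma sum_walks_Suc:
  assumes "finite V"
  shows "(\<Sum>p'\<in>walks V E (Suc q). f p') = (\<Sum>p\<in>walks V E q. \<Sum>z\<in>{z \<in> V. E (last p) z}. f (p @ [z]))"
proof -
  have "(\<Sum>p'\<in>walks V E (Suc q). f p') = (\<Sum>x\<in>(SIGMA p:walks V E q. {z \<in> V. E (last p) z}). f ((\<lambda>(p, z). p @ [z]) x))"
    unfolding walks_Suc by (rule sum.reindex[OF inj_snoc, unfolded comp_def])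
  also have "\<dots> = (\<Sum>p\<in>walks V E q. \<Sum>z\<in>{z \<in> V. E (last p) z}. f (p @ [z]))"
    using sum.Sigma[of "walks V E q" "\<lambda>p. {z \<in> V. E (last p) z}" "\<lambda>p z. f (p @ [z])"] assms finite_walks
    by (simp add: split_def)
  finally show ?thesis .
qed

lemma walk_weight_snoc:
  assumes "p \<noteq> []"
  shows "walk_weight V E (p @ [z]) = walk_weight V E p / real (deg V E (last p))"
proof -
  obtain n where n: "length p = Suc n" using assms by (cases p) auto
  have "(\<Prod>i<length (p @ [z]) - 1. 1 / real (deg V E ((p @ [z]) ! i))) =
        (\<Prod>i<Suc n. 1 / real (deg V E (p ! i)))"
    using n by (intro prod.cong) (auto simp: nth_append)
  also have "\<dots> = (\<Prod>i<n. 1 / real (deg V E (p ! i))) * (1 / real (deg V E (p ! n)))"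
    by simp
  finally have P: "(\<Prod>i<length (p @ [z]) - 1. 1 / real (deg V E ((p @ [z]) ! i))) =
      (\<Prod>i<n. 1 / real (deg V E (p ! i))) * (1 / real (deg V E (p ! n)))" .
  have h: "(p @ [z]) ! 0 = p ! 0" using n by (simp add: nth_append)
  show ?thesis unfolding walk_weight_def P h last_len[OF n] using n by simp
qed

lemma walks_nth_V: "p \<in> walks V E q \<Longrightarrow> i \<le> q \<Longrightarrow> p ! i \<in> V"
  by (auto simp: walks_def)

lemma walks_ne: "p \<in> walks V E q \<Longrightarrow> p \<noteq> []"
  by (auto simp: walks_def)

lemma walks_last: "p \<in> walks V E q \<Longrightarrow> last p = p ! q"
proof -
  assume "p \<in> walks V E q"
  then have "length p = Suc q" by (simp add: walks_def)
  then show ?thesis by (rule last_len)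
qed

definition nu :: "nat set \<Rightarrow> (nat \<Rightarrow> nat \<Rightarrow> bool) \<Rightarrow> nat \<Rightarrow> real" where
  "nu V E v = real (deg V E v) / (2 * real (card (oedges V E)))"

lemma stationary:
  assumes G: "simple_graph V E" and pos: "\<forall>u\<in>V. deg V E u > 0"
  shows "i \<le> q \<Longrightarrow> (\<Sum>p\<in>walks V E q. walk_weight V E p * (if p ! i = v then 1 else 0)) = nu V E v"
proof (induction q arbitrary: i v)
  case 0
  then have i: "i = 0" by simp
  have fV: "finite V" using G by (rule sg_finite)
  have "(\<Sum>p\<in>walks V E 0. walk_weight V E p * (if p ! i = v then 1 else 0)) =
        (\<Sum>u\<in>V. walk_weight V E [u] * (if u = v then 1 else 0))"
    unfolding walks_0 i by (subst sum.reindex) (auto simp: inj_on_def)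
  also have "\<dots> = (\<Sum>u\<in>V. nu V E u * (if u = v then 1 else 0))"
    by (simp add: walk_weight_def nu_def)
  also have "\<dots> = (\<Sum>u\<in>V. if u = v then nu V E u else 0)"
    by (intro sum.cong) auto
  also have "\<dots> = (if v \<in> V then nu V E v else 0)"
    using fV by (simp add: sum.delta)
  also have "\<dots> = nu V E v"
    using deg_notin[OF G, of v] by (simp add: nu_def)
  finally show ?case .
next
  case (Suc q)
  have fV: "finite V" using G by (rule sg_finite)
  let ?N = "\<lambda>p. {z \<in> V. E (last p) z}"
  have wsn: "walk_weight V E (p @ [z]) = walk_weight V E p / real (deg V E (last p))" if "p \<in> walks V E q" for p z
    using walk_weight_snoc walks_ne[OF that] by blast
  have lastV: "last p \<in> V" and cardN: "card (?N p) = deg V E (last p)" if "p \<in> walks V E q" for p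
    using walks_nth_V[OF that, of q] walks_last[OF that] by (auto simp: deg_def)
  have lenp: "length p = Suc q" if "p \<in> walks V E q" for p using that by (simp add: walks_def)
  show ?case
  proof (cases "i \<le> q")
    case True
    have "(\<Sum>p'\<in>walks V E (Suc q). walk_weight V E p' * (if p' ! i = v then 1 else 0)) =
          (\<Sum>p\<in>walks V E q. \<Sum>z\<in>?N p. walk_weight V E p / real (deg V E (last p)) * (if p ! i = v then 1 else 0))"
      unfolding sum_walks_Suc[OF fV]
      by (intro sum.cong refl) (use True lenp in \<open>auto simp: wsn nth_append\<close>)
    also have "\<dots> = (\<Sum>p\<in>walks V E q. walk_weight V E p * (if p ! i = v then 1 else 0))"
    proof (intro sum.cong refl)
      fix p assume p: "p \<in> walks V E q"
      have "deg V E (last p) > 0" using pos lastV[OF p] by blast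
      then show "(\<Sum>z\<in>?N p. walk_weight V E p / real (deg V E (last p)) * (if p ! i = v then 1 else 0)) =
          walk_weight V E p * (if p ! i = v then 1 else 0)"
        using cardN[OF p] by simp
    qed
    also have "\<dots> = nu V E v" using Suc.IH[OF True] .
    finally show ?thesis .
  next
    case False
    then have i: "i = Suc q" using Suc.prems by simp
    define h where "h u = (if E u v then 1 / real (deg V E u) else 0)" for u
    have "(\<Sum>p'\<in>walks V E (Suc q). walk_weight V E p' * (if p' ! i = v then 1 else 0)) =
          (\<Sum>p\<in>walks V E q. \<Sum>z\<in>?N p. walk_weight V E p / real (deg V E (last p)) * (if z = v then 1 else 0))"
      unfolding sum_walks_Suc[OF fV]
      by (intro sum.cong refl) (use i lenp in \<open>auto simp: wsn nth_append\<close>)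
    also have "\<dots> = (\<Sum>p\<in>walks V E q. walk_weight V E p * h (p ! q))"
    proof (intro sum.cong refl)
      fix p assume p: "p \<in> walks V E q"
      have fN: "finite (?N p)" using fV by simp
      have "(\<Sum>z\<in>?N p. walk_weight V E p / real (deg V E (last p)) * (if z = v then 1 else 0)) =
            (if v \<in> ?N p then walk_weight V E p / real (deg V E (last p)) else 0)"
        using fN by (simp add: sum.delta' if_distrib[of "\<lambda>x. _ * x"] cong: if_cong)
      also have "\<dots> = walk_weight V E p * h (p ! q)"
        unfolding h_def walks_last[OF p, symmetric] using sg_E[OF G, of "last p" v] by auto
      finally show "(\<Sum>z\<in>?N p. walk_weight V E p / real (deg V E (last p)) * (if z = v then 1 else 0)) =
            walk_weight V E p * h (p ! q)" .
    qed
    also have "\<dots> = (\<Sum>p\<in>walks V E q. \<Sum>u\<in>V. h u * (walk_weight V E p * (if p ! q = u then 1 else 0)))"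
    proof (intro sum.cong refl)
      fix p assume p: "p \<in> walks V E q"
      have "p ! q \<in> V" using walks_nth_V[OF p] by simp
      then show "walk_weight V E p * h (p ! q) = (\<Sum>u\<in>V. h u * (walk_weight V E p * (if p ! q = u then 1 else 0)))"
        using fV by (simp add: if_distrib[of "\<lambda>x. _ * x"] sum.delta cong: if_cong)
    qed
    also have "\<dots> = (\<Sum>u\<in>V. h u * (\<Sum>p\<in>walks V E q. walk_weight V E p * (if p ! q = u then 1 else 0)))"
      by (subst sum.swap) (simp add: sum_distrib_left)
    also have "\<dots> = (\<Sum>u\<in>V. h u * nu V E u)"
      using Suc.IH[of q] by simp
    also have "\<dots> = (\<Sum>u\<in>V. if E u v then 1 / (2 * real (card (oedges V E))) else 0)"
    proof (intro sum.cong refl)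
      fix u assume u: "u \<in> V"
      have "deg V E u > 0" using pos u by blast
      then show "h u * nu V E u = (if E u v then 1 / (2 * real (card (oedges V E))) else 0)"
        by (simp add: h_def nu_def)
    qed
    also have "\<dots> = real (card (V \<inter> {u. E u v})) / (2 * real (card (oedges V E)))"
      using fV by (simp add: sum.If_cases)
    also have "\<dots> = nu V E v"
    proof -
      have "V \<inter> {u. E u v} = {u \<in> V. E u v}" by blast
      then show ?thesis by (simp add: nu_def deg_sym[OF G])
    qed
    finally show ?thesis .
  qed
qed

lemma card_oedges_pos:
  assumes G: "simple_graph V E" and pos: "\<forall>u\<in>V. deg V E u > 0" and V: "V \<noteq> {}"
  shows "card (oedges V E) > 0"
proof -
  obtain u where u: "u \<in> V" using V by blast
  then have "deg V E u > 0" using pos by blast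
  then have "(\<Sum>u\<in>V. deg V E u) > 0" using u sg_finite[OF G]
    by (metis gr0I sum_eq_0_iff)
  then show ?thesis using handshake[OF G] by simp
qed

lemma nu_sum:
  assumes G: "simple_graph V E" and pos: "\<forall>u\<in>V. deg V E u > 0" and V: "V \<noteq> {}"
  shows "(\<Sum>v\<in>V. nu V E v) = 1"
proof -
  have c: "card (oedges V E) > 0" by (rule card_oedges_pos[OF G pos V])
  have "(\<Sum>v\<in>V. nu V E v) = real (\<Sum>v\<in>V. deg V E v) / (2 * real (card (oedges V E)))"
    unfolding nu_def by (simp add: sum_divide_distrib)
  then show ?thesis using handshake[OF G] c by simp
qed

lemma total_weight:
  assumes G: "simple_graph V E" and pos: "\<forall>u\<in>V. deg V E u > 0" and V: "V \<noteq> {}"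
  shows "(\<Sum>p\<in>walks V E q. walk_weight V E p) = 1"
proof -
  have fV: "finite V" using G by (rule sg_finite)
  have "(\<Sum>p\<in>walks V E q. walk_weight V E p) =
        (\<Sum>p\<in>walks V E q. \<Sum>v\<in>V. walk_weight V E p * (if p ! 0 = v then 1 else 0))"
  proof (intro sum.cong refl)
    fix p assume p: "p \<in> walks V E q"
    have "p ! 0 \<in> V" using walks_nth_V[OF p] by simp
    then show "walk_weight V E p = (\<Sum>v\<in>V. walk_weight V E p * (if p ! 0 = v then 1 else 0))"
      using fV by (simp add: if_distrib[of "\<lambda>x. _ * x"] sum.delta cong: if_cong)
  qed
  also have "\<dots> = (\<Sum>v\<in>V. nu V E v)"
    by (subst sum.swap) (simp add: stationary[OF G pos])
  finally show ?thesis using nu_sum[OF G pos V] by simp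
qed

lemma path_exists:
  assumes G: "simple_graph V E" and deg2: "\<forall>u\<in>V. 2 \<le> deg V E u"
  shows "(\<forall>c. is_cycle V E c \<longrightarrow> q < length c) \<Longrightarrow> u \<in> V \<Longrightarrow> \<exists>p\<in>walks V E q. p ! 0 = u \<and> distinct p"
proof (induction q)
  case 0
  then show ?case by (intro bexI[of _ "[u]"]) (auto simp: walks_def)
next
  case (Suc q)
  then have "\<forall>c. is_cycle V E c \<longrightarrow> q < length c" by auto
  then obtain p where p: "p \<in> walks V E q" "p ! 0 = u" "distinct p" using Suc.IH Suc.prems(2) by blast
  have lp: "length p = Suc q" using p by (simp add: walks_def)
  define v where "v = last p"
  have v: "v = p ! q" "v \<in> V" using walks_last[OF p(1)] walks_nth_V[OF p(1), of q] by (auto simp: v_def)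
  let ?N = "{z \<in> V. E v z}"
  have cN: "card ?N \<ge> 2" using deg2 v(2) by (simp add: deg_def)
  have fN: "finite ?N" using sg_finite[OF G] by simp
  obtain z where z: "z \<in> ?N" "q \<noteq> 0 \<Longrightarrow> z \<noteq> p ! (q - 1)"
  proof -
    have "?N - {p ! (q - 1)} \<noteq> {}"
    proof
      assume "?N - {p ! (q - 1)} = {}"
      then have "?N \<subseteq> {p ! (q - 1)}" by blast
      then have "card ?N \<le> 1" using card_mono[of "{p ! (q - 1)}" ?N] by simp
      then show False using cN by simp
    qed
    then show ?thesis using that by blast
  qed
  have zv: "z \<noteq> v" "E v z" using z(1) sg_E[OF G, of v z] by auto
  have znot: "z \<notin> set p"
  proof
    assume "z \<in> set p"
    then obtain i where i: "i < Suc q" "p ! i = z" using lp by (auto simp: in_set_conv_nth)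
    have "i \<noteq> q" using i zv v by auto
    moreover have "q \<noteq> 0 \<Longrightarrow> i \<noteq> q - 1" using i z(2) by auto
    ultimately have iq: "i + 2 \<le> q" using i by (cases q) auto
    define c where "c = drop i p"
    have lc: "length c = Suc q - i" using lp by (simp add: c_def)
    have "is_cycle V E c"
      unfolding is_cycle_def
    proof (intro conjI allI impI)
      show "3 \<le> length c" using lc iq by simp
      show "distinct c" using p(3) by (simp add: c_def)
      show "set c \<subseteq> V" using p(1) by (auto simp: c_def walks_def dest: in_set_dropD)
      fix m assume "Suc m < length c"
      then have "i + m < q" using lc by simp
      then show "E (c ! m) (c ! Suc m)" using p(1) lp by (simp add: c_def walks_def)
    next
      have "last c = v" using lp iq by (simp add: c_def v_def)
      moreover have "hd c = z" using lp i by (simp add: c_def hd_drop_conv_nth)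
      ultimately show "E (last c) (hd c)" using zv by simp
    qed
    then have "Suc q < length c" using Suc.prems(1) by blast
    then show False using lc by simp
  qed
  have "p @ [z] \<in> walks V E (Suc q)"
    unfolding walks_Suc by (rule image_eqI[where x = "(p, z)"]) (use p(1) z(1) v_def in auto)
  moreover have "(p @ [z]) ! 0 = u" using p(2) lp by (simp add: nth_append)
  moreover have "distinct (p @ [z])" using p(3) znot by simp
  ultimately show ?case by blast
qed

lemma concat_words: "\<forall>x\<in>set xs. x \<in> words k j \<Longrightarrow> concat xs \<in> words k (length xs * j)"
  by (induction xs) (auto simp: words_def)

lemma oedge_orient:
  assumes G: "simple_graph V E" and "E a b"
  shows "(if a < b then (a, b) else (b, a)) \<in> oedges V E"
  using sg_E[OF G assms(2)] assms(2) by (auto simp: oedges_def)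

lemma elab_words:
  assumes G: "simple_graph V E" and "E a b" and \<alpha>: "\<alpha> \<in> labelings k j V E"
  shows "elab \<alpha> a b \<in> words k j"
proof -
  have "\<alpha> e \<in> words k j" if "e \<in> oedges V E" for e using \<alpha> that by (auto simp: labelings_def)
  then show ?thesis using oedge_orient[OF G assms(2)] by (auto simp: elab_def winv_words split: if_splits)
qed

lemma plab_words:
  assumes G: "simple_graph V E" and p: "p \<in> walks V E q" and \<alpha>: "\<alpha> \<in> labelings k j V E"
  shows "plab \<alpha> p \<in> words k (q * j)"
proof -
  have lp: "length p = Suc q" using p by (simp add: walks_def)
  have "\<forall>x\<in>set (map (\<lambda>i. elab \<alpha> (p ! i) (p ! Suc i)) [0..<length p - 1]). x \<in> words k j"
    using p lp by (auto simp: walks_def intro!: elab_words[OF G _ \<alpha>])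
  from concat_words[OF this] show ?thesis using lp by (simp add: plab_def)
qed

lemma plab_cong:
  assumes G: "simple_graph V E" and p: "p \<in> walks V E q"
    and agree: "\<forall>e\<in>oedges V E \<inter> (set p \<times> set p). \<alpha> e = \<alpha>' e"
  shows "plab \<alpha> p = plab \<alpha>' p"
  unfolding plab_def
proof (intro arg_cong[where f = concat] map_cong refl)
  fix i assume "i \<in> set [0..<length p - 1]"
  then have i: "i < q" "length p = Suc q" using p by (auto simp: walks_def)
  have E: "E (p ! i) (p ! Suc i)" using p i by (simp add: walks_def)
  have inp: "p ! i \<in> set p" "p ! Suc i \<in> set p" using i by auto
  have "(if p ! i < p ! Suc i then (p ! i, p ! Suc i) else (p ! Suc i, p ! i)) \<in> oedges V E \<inter> (set p \<times> set p)"
    using oedge_orient[OF G E] inp by auto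
  then show "elab \<alpha> (p ! i) (p ! Suc i) = elab \<alpha>' (p ! i) (p ! Suc i)"
    using agree by (auto simp: elab_def split: if_splits)
qed

lemma plab_single: "plab \<alpha> [u, v] = elab \<alpha> u v"
  by (simp add: plab_def)

lemma chunks_concat:
  "length w = q * j \<Longrightarrow> concat (map (\<lambda>i. take j (drop (i * j) w)) [0..<q]) = w"
proof (induction q arbitrary: w)
  case (Suc q)
  have "concat (map (\<lambda>i. take j (drop (i * j) w)) [0..<Suc q]) =
        take j w @ concat (map (\<lambda>i. take j (drop (i * j) (drop j w))) [0..<q])"
    by (simp add: upt_conv_Cons map_Suc_upt[symmetric] drop_drop add.commute comp_def del: upt_Suc)
  also have "\<dots> = take j w @ drop j w" using Suc.IH[of "drop j w"] Suc.prems by simp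
  finally show ?case by simp
qed simp

lemma sum_sq_dev:
  fixes Z :: "'a \<Rightarrow> real"
  assumes "finite \<Omega>" "m = (\<Sum>\<alpha>\<in>\<Omega>. Z \<alpha>) / card \<Omega>" "card \<Omega> > 0"
  shows "(\<Sum>\<alpha>\<in>\<Omega>. (Z \<alpha> - m)\<^sup>2) = (\<Sum>\<alpha>\<in>\<Omega>. (Z \<alpha>)\<^sup>2) - (\<Sum>\<alpha>\<in>\<Omega>. Z \<alpha>)\<^sup>2 / card \<Omega>"
proof -
  define c where "c = real (card \<Omega>)"
  have c: "c > 0" using assms(3) by (simp add: c_def)
  have s: "(\<Sum>\<alpha>\<in>\<Omega>. Z \<alpha>) = c * m" using assms c by (simp add: c_def)
  have "(\<Sum>\<alpha>\<in>\<Omega>. (Z \<alpha> - m)\<^sup>2) = (\<Sum>\<alpha>\<in>\<Omega>. (Z \<alpha>)\<^sup>2 + m\<^sup>2 - 2 * Z \<alpha> * m)"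
    by (intro sum.cong refl) (rule power2_diff)
  also have "\<dots> = (\<Sum>\<alpha>\<in>\<Omega>. (Z \<alpha>)\<^sup>2) + c * m\<^sup>2 - 2 * (\<Sum>\<alpha>\<in>\<Omega>. Z \<alpha>) * m"
    by (simp add: sum.distrib sum_subtractf sum_distrib_right[symmetric] sum_distrib_left[symmetric] c_def)
  also have "\<dots> = (\<Sum>\<alpha>\<in>\<Omega>. (Z \<alpha>)\<^sup>2) - (c * m)\<^sup>2 / c"
    unfolding s using c by (simp add: power2_eq_square)
  finally show ?thesis unfolding s c_def .
qed

lemma var_bound:
  fixes w :: "'p \<Rightarrow> real" and X :: "'p \<Rightarrow> ('i \<Rightarrow> 'a) \<Rightarrow> real" and D :: "'p \<Rightarrow> 'i set"
  assumes I: "finite I" and W: "finite W" "W \<noteq> {}" and P: "finite P"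
    and w: "\<forall>p\<in>P. 0 \<le> w p" and X: "\<forall>p \<alpha>. 0 \<le> X p \<alpha> \<and> X p \<alpha> \<le> 1" and D: "\<forall>p\<in>P. D p \<subseteq> I"
    and dep: "\<forall>p\<in>P. \<forall>\<alpha>\<in>PiE I (\<lambda>_. W). \<forall>\<alpha>'\<in>PiE I (\<lambda>_. W). (\<forall>i\<in>D p. \<alpha> i = \<alpha>' i) \<longrightarrow> X p \<alpha> = X p \<alpha>'"
    and m: "m = (\<Sum>\<alpha>\<in>PiE I (\<lambda>_. W). \<Sum>p\<in>P. w p * X p \<alpha>) / card (PiE I (\<lambda>_. W))"
  shows "(\<Sum>\<alpha>\<in>PiE I (\<lambda>_. W). ((\<Sum>p\<in>P. w p * X p \<alpha>) - m)\<^sup>2)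
         \<le> card (PiE I (\<lambda>_. W)) * (\<Sum>p\<in>P. \<Sum>p'\<in>P. if D p \<inter> D p' = {} then 0 else w p * w p')"
proof -
  let ?\<Omega> = "PiE I (\<lambda>_. W)"
  let ?c = "real (card ?\<Omega>)"
  have fO: "finite ?\<Omega>" using I W by (simp add: finite_PiE)
  have cpos: "card ?\<Omega> > 0" using fO W by (simp add: card_gt_0_iff PiE_eq_empty_iff)
  define S where "S p = (\<Sum>\<alpha>\<in>?\<Omega>. X p \<alpha>)" for p
  define T where "T p p' = (\<Sum>\<alpha>\<in>?\<Omega>. X p \<alpha> * X p' \<alpha>)" for p p'
  have sq: "(\<Sum>\<alpha>\<in>?\<Omega>. (\<Sum>p\<in>P. w p * X p \<alpha>)\<^sup>2) = (\<Sum>p\<in>P. \<Sum>p'\<in>P. w p * w p' * T p p')"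
  proof -
    have "(\<Sum>\<alpha>\<in>?\<Omega>. (\<Sum>p\<in>P. w p * X p \<alpha>)\<^sup>2) = (\<Sum>\<alpha>\<in>?\<Omega>. \<Sum>p\<in>P. \<Sum>p'\<in>P. w p * w p' * (X p \<alpha> * X p' \<alpha>))"
      unfolding power2_eq_square sum_product by (intro sum.cong refl) (simp only: mult_ac)
    also have "\<dots> = (\<Sum>p\<in>P. \<Sum>\<alpha>\<in>?\<Omega>. \<Sum>p'\<in>P. w p * w p' * (X p \<alpha> * X p' \<alpha>))"
      by (rule sum.swap)
    also have "\<dots> = (\<Sum>p\<in>P. \<Sum>p'\<in>P. \<Sum>\<alpha>\<in>?\<Omega>. w p * w p' * (X p \<alpha> * X p' \<alpha>))"
      by (intro sum.cong refl) (rule sum.swap)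
    also have "\<dots> = (\<Sum>p\<in>P. \<Sum>p'\<in>P. w p * w p' * T p p')"
      unfolding T_def by (simp add: sum_distrib_left)
    finally show ?thesis .
  qed
  have tot: "(\<Sum>\<alpha>\<in>?\<Omega>. \<Sum>p\<in>P. w p * X p \<alpha>) = (\<Sum>p\<in>P. w p * S p)"
    unfolding S_def by (subst sum.swap) (simp add: sum_distrib_left)
  have tot2: "(\<Sum>\<alpha>\<in>?\<Omega>. \<Sum>p\<in>P. w p * X p \<alpha>)\<^sup>2 / ?c = (\<Sum>p\<in>P. \<Sum>p'\<in>P. w p * w p' * (S p * S p' / ?c))"
    unfolding tot power2_eq_square sum_product sum_divide_distrib
    by (intro sum.cong refl) (simp only: times_divide_eq_right mult_ac)
  have "(\<Sum>\<alpha>\<in>?\<Omega>. ((\<Sum>p\<in>P. w p * X p \<alpha>) - m)\<^sup>2) = (\<Sum>p\<in>P. \<Sum>p'\<in>P. w p * w p' * (T p p' - S p * S p' / ?c))"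
    unfolding sum_sq_dev[OF fO m cpos] sq tot2
    by (simp only: sum_subtractf[symmetric] right_diff_distrib)
  also have "\<dots> \<le> (\<Sum>p\<in>P. \<Sum>p'\<in>P. ?c * (if D p \<inter> D p' = {} then 0 else w p * w p'))"
  proof (intro sum_mono)
    fix p p' assume pp: "p \<in> P" "p' \<in> P"
    show "w p * w p' * (T p p' - S p * S p' / ?c) \<le> ?c * (if D p \<inter> D p' = {} then 0 else w p * w p')"
    proof (cases "D p \<inter> D p' = {}")
      case True
      have "T p p' * ?c = S p * S p'"
        unfolding T_def S_def
        apply (rule indep_sum[OF I(1) _ _ True W(2)])
        using D pp apply blast
        using D pp apply blast
        using dep pp(1) apply blast
        using dep pp(2) apply blast
        done
      then have "T p p' - S p * S p' / ?c = 0" using cpos by (simp add: field_simps)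
      then show ?thesis using True by simp
    next
      case False
      have t1: "T p p' \<le> (\<Sum>\<alpha>\<in>?\<Omega>. 1)" unfolding T_def
        by (intro sum_mono) (use X in \<open>auto intro: mult_le_one\<close>)
      have s1: "S p \<ge> 0" "S p' \<ge> 0" unfolding S_def using X by (auto intro: sum_nonneg)
      have s2: "S p * S p' / ?c \<ge> 0" using s1 by simp
      have h1: "T p p' - S p * S p' / ?c \<le> ?c" using t1 s2 by simp
      have "w p * w p' \<ge> 0" using w pp by simp
      then have "w p * w p' * (T p p' - S p * S p' / ?c) \<le> w p * w p' * ?c"
        using h1 by (simp add: mult_left_mono)
      then show ?thesis using False by (simp only: if_False mult.commute)
    qed
  qed
  also have "\<dots> = ?c * (\<Sum>p\<in>P. \<Sum>p'\<in>P. if D p \<inter> D p' = {} then 0 else w p * w p')"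
    by (simp add: sum_distrib_left)
  finally show ?thesis .
qed

lemma cheb:
  fixes Z :: "'a \<Rightarrow> real"
  assumes "finite \<Omega>" "t > 0"
  shows "real (card {\<alpha> \<in> \<Omega>. t \<le> \<bar>Z \<alpha> - m\<bar>}) * t\<^sup>2 \<le> (\<Sum>\<alpha>\<in>\<Omega>. (Z \<alpha> - m)\<^sup>2)"
proof -
  let ?B = "{\<alpha> \<in> \<Omega>. t \<le> \<bar>Z \<alpha> - m\<bar>}"
  have "real (card ?B) * t\<^sup>2 = (\<Sum>\<alpha>\<in>?B. t\<^sup>2)" by simp
  also have "\<dots> \<le> (\<Sum>\<alpha>\<in>?B. (Z \<alpha> - m)\<^sup>2)"
  proof (intro sum_mono)
    fix \<alpha> assume "\<alpha> \<in> ?B"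
    then have "t \<le> \<bar>Z \<alpha> - m\<bar>" by simp
    then show "t\<^sup>2 \<le> (Z \<alpha> - m)\<^sup>2" using assms(2)
      by (metis abs_of_pos less_le_trans power2_abs power_mono order_less_imp_le)
  qed
  also have "\<dots> \<le> (\<Sum>\<alpha>\<in>\<Omega>. (Z \<alpha> - m)\<^sup>2)"
    by (rule sum_mono2) (use assms(1) in auto)
  finally show ?thesis .
qed

definition Ind :: "(nat \<times> nat \<Rightarrow> letter list) \<Rightarrow> nat list \<Rightarrow> letter list \<Rightarrow> real" where
  "Ind \<alpha> p y = (if red (plab \<alpha> p) = y then 1 else 0)"

definition Mq :: "nat set \<Rightarrow> (nat \<Rightarrow> nat \<Rightarrow> bool) \<Rightarrow> nat \<Rightarrow> letter list \<Rightarrow> (nat \<times> nat \<Rightarrow> letter list) \<Rightarrow> real" where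
  "Mq V E q y \<alpha> = (\<Sum>p\<in>walks V E q. walk_weight V E p * Ind \<alpha> p y)"

definition Dp :: "nat set \<Rightarrow> (nat \<Rightarrow> nat \<Rightarrow> bool) \<Rightarrow> nat list \<Rightarrow> (nat \<times> nat) set" where
  "Dp V E p = oedges V E \<inter> (set p \<times> set p)"

lemma walk_weight_nonneg: "walk_weight V E p \<ge> 0"
  by (simp add: walk_weight_def prod_nonneg)

lemma walks_set: "p \<in> walks V E q \<Longrightarrow> set p \<subseteq> V"
  by (simp add: walks_def)

lemma overlap_bound:
  assumes G: "simple_graph V E" and pos: "\<forall>u\<in>V. deg V E u > 0"
  shows "(\<Sum>p\<in>walks V E q. \<Sum>p'\<in>walks V E q. if Dp V E p \<inter> Dp V E p' = {} then 0 else walk_weight V E p * walk_weight V E p')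
         \<le> (real q + 1)\<^sup>2 * (\<Sum>v\<in>V. (nu V E v)\<^sup>2)"
proof -
  let ?w = "walk_weight V E"
  let ?P = "walks V E q"
  define a where "a p v = (if v \<in> set p then 1 else 0 :: real)" for p :: "nat list" and v
  have fV: "finite V" using G by (rule sg_finite)
  have fP: "finite ?P" using fV by (rule finite_walks)
  have step1: "(if Dp V E p \<inter> Dp V E p' = {} then 0 else ?w p * ?w p') \<le> (\<Sum>v\<in>V. (?w p * a p v) * (?w p' * a p' v))"
    if pp: "p \<in> ?P" "p' \<in> ?P" for p p'
  proof (cases "Dp V E p \<inter> Dp V E p' = {}")
    case True
    then show ?thesis by (simp add: a_def sum_nonneg walk_weight_nonneg)
  next
    case False
    then obtain x y where xy: "(x, y) \<in> Dp V E p" "(x, y) \<in> Dp V E p'" by auto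
    then have x: "x \<in> set p" "x \<in> set p'" by (auto simp: Dp_def)
    then have xV: "x \<in> V" using walks_set[OF pp(1)] by auto
    have "?w p * ?w p' = (?w p * a p x) * (?w p' * a p' x)" using x by (simp add: a_def)
    also have "\<dots> \<le> (\<Sum>v\<in>V. (?w p * a p v) * (?w p' * a p' v))"
      by (rule member_le_sum[OF xV _ fV]) (simp add: a_def walk_weight_nonneg)
    finally show ?thesis using False by simp
  qed
  have "(\<Sum>p\<in>?P. \<Sum>p'\<in>?P. if Dp V E p \<inter> Dp V E p' = {} then 0 else ?w p * ?w p')
        \<le> (\<Sum>p\<in>?P. \<Sum>p'\<in>?P. \<Sum>v\<in>V. (?w p * a p v) * (?w p' * a p' v))"
    by (intro sum_mono step1)
  also have "\<dots> = (\<Sum>v\<in>V. \<Sum>p\<in>?P. \<Sum>p'\<in>?P. (?w p * a p v) * (?w p' * a p' v))"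
  proof -
    have "(\<Sum>p\<in>?P. \<Sum>p'\<in>?P. \<Sum>v\<in>V. (?w p * a p v) * (?w p' * a p' v)) =
          (\<Sum>p\<in>?P. \<Sum>v\<in>V. \<Sum>p'\<in>?P. (?w p * a p v) * (?w p' * a p' v))"
      by (intro sum.cong refl) (rule sum.swap)
    also have "\<dots> = (\<Sum>v\<in>V. \<Sum>p\<in>?P. \<Sum>p'\<in>?P. (?w p * a p v) * (?w p' * a p' v))"
      by (rule sum.swap)
    finally show ?thesis .
  qed
  also have "\<dots> = (\<Sum>v\<in>V. (\<Sum>p\<in>?P. ?w p * a p v)\<^sup>2)"
    by (simp add: power2_eq_square sum_product)
  also have "\<dots> \<le> (\<Sum>v\<in>V. ((real q + 1) * nu V E v)\<^sup>2)"
  proof (intro sum_mono power_mono)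
    fix v assume v: "v \<in> V"
    show "0 \<le> (\<Sum>p\<in>?P. ?w p * a p v)" by (intro sum_nonneg) (simp add: a_def walk_weight_nonneg)
    have "(\<Sum>p\<in>?P. ?w p * a p v) \<le> (\<Sum>p\<in>?P. \<Sum>i\<in>{..q}. ?w p * (if p ! i = v then 1 else 0))"
    proof (intro sum_mono)
      fix p assume p: "p \<in> ?P"
      have lp: "length p = Suc q" using p by (simp add: walks_def)
      have "a p v \<le> (\<Sum>i\<in>{..q}. (if p ! i = v then 1 else 0))"
      proof (cases "v \<in> set p")
        case True
        then obtain i where i: "i < Suc q" "p ! i = v" using lp by (auto simp: in_set_conv_nth)
        have "(1::real) = (if p ! i = v then 1 else 0)" using i by simp
        also have "\<dots> \<le> (\<Sum>i\<in>{..q}. (if p ! i = v then 1 else 0))"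
          by (rule member_le_sum) (use i in auto)
        finally show ?thesis using True by (simp add: a_def)
      qed (simp add: a_def sum_nonneg)
      then have "?w p * a p v \<le> ?w p * (\<Sum>i\<in>{..q}. (if p ! i = v then 1 else 0))"
        by (rule mult_left_mono) (rule walk_weight_nonneg)
      then show "?w p * a p v \<le> (\<Sum>i\<in>{..q}. ?w p * (if p ! i = v then 1 else 0))"
        by (simp add: sum_distrib_left)
    qed
    also have "\<dots> = (\<Sum>i\<in>{..q}. \<Sum>p\<in>?P. ?w p * (if p ! i = v then 1 else 0))"
      by (rule sum.swap)
    also have "\<dots> = (\<Sum>i\<in>{..q}. nu V E v)"
      by (intro sum.cong refl) (simp add: stationary[OF G pos])
    also have "\<dots> = (real q + 1) * nu V E v" by simp
    finally show "(\<Sum>p\<in>?P. ?w p * a p v) \<le> (real q + 1) * nu V E v" .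
  qed
  also have "\<dots> = (real q + 1)\<^sup>2 * (\<Sum>v\<in>V. (nu V E v)\<^sup>2)"
    by (simp add: power_mult_distrib sum_distrib_left)
  finally show ?thesis .
qed

lemma nu_sq_bound:
  assumes G: "simple_graph V E" and degs: "\<forall>u\<in>V. 3 \<le> deg V E u \<and> deg V E u \<le> d" and V: "V \<noteq> {}"
  shows "(\<Sum>v\<in>V. (nu V E v)\<^sup>2) \<le> real d ^ 2 / (9 * real (card V))"
proof -
  have fV: "finite V" using G by (rule sg_finite)
  have N: "card V > 0" using fV V by (simp add: card_gt_0_iff)
  have "3 * card V \<le> (\<Sum>u\<in>V. deg V E u)"
    using sum_mono[of V "\<lambda>_. 3" "deg V E"] degs by simp
  then have e: "3 * real (card V) \<le> 2 * real (card (oedges V E))"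
    using handshake[OF G] by linarith
  have "nu V E v \<le> real d / (3 * real (card V))" if v: "v \<in> V" for v
  proof -
    have "nu V E v = real (deg V E v) / (2 * real (card (oedges V E)))" by (simp add: nu_def)
    also have "\<dots> \<le> real d / (2 * real (card (oedges V E)))"
      using degs v by (intro divide_right_mono) auto
    also have "\<dots> \<le> real d / (3 * real (card V))"
      using e N by (intro divide_left_mono) auto
    finally show ?thesis .
  qed
  then have "(\<Sum>v\<in>V. (nu V E v)\<^sup>2) \<le> (\<Sum>v\<in>V. (real d / (3 * real (card V)))\<^sup>2)"
    by (intro sum_mono power_mono) (auto simp: nu_def)
  also have "\<dots> = real (card V) * (real d)\<^sup>2 / (9 * (real (card V))\<^sup>2)"
    by (simp add: power_divide power_mult_distrib)
  also have "\<dots> = real d ^ 2 / (9 * real (card V))"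
    using N by (simp add: power2_eq_square)
  finally show ?thesis .
qed

lemma words_ne: "k \<ge> 1 \<Longrightarrow> words k j \<noteq> {}"
proof -
  assume "k \<ge> 1"
  then have "card (words k j) > 0" by (simp add: card_words)
  then show ?thesis by auto
qed

lemma Ind_01: "0 \<le> Ind \<alpha> p y \<and> Ind \<alpha> p y \<le> 1"
  by (simp add: Ind_def)

lemma Mq_var:
  assumes G: "simple_graph V E" and degs: "\<forall>u\<in>V. 3 \<le> deg V E u \<and> deg V E u \<le> d" and V: "V \<noteq> {}"
    and k: "k \<ge> 1"
    and m: "m = (\<Sum>\<alpha>\<in>labelings k j V E. Mq V E q y \<alpha>) / card (labelings k j V E)"
  shows "(\<Sum>\<alpha>\<in>labelings k j V E. (Mq V E q y \<alpha> - m)\<^sup>2)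
         \<le> card (labelings k j V E) * ((real q + 1)\<^sup>2 * (real d ^ 2 / (9 * real (card V))))"
proof -
  have pos: "\<forall>u\<in>V. deg V E u > 0" using degs by auto
  have fV: "finite V" using G by (rule sg_finite)
  have "(\<Sum>\<alpha>\<in>labelings k j V E. (Mq V E q y \<alpha> - m)\<^sup>2)
        \<le> card (labelings k j V E) * (\<Sum>p\<in>walks V E q. \<Sum>p'\<in>walks V E q.
             if Dp V E p \<inter> Dp V E p' = {} then 0 else walk_weight V E p * walk_weight V E p')"
    unfolding labelings_def Mq_def
  proof (rule var_bound[OF finite_oedges[OF G] finite_words words_ne[OF k] finite_walks[OF fV]])
    show "\<forall>p\<in>walks V E q. 0 \<le> walk_weight V E p" by (simp add: walk_weight_nonneg)
    show "\<forall>p \<alpha>. 0 \<le> Ind \<alpha> p y \<and> Ind \<alpha> p y \<le> 1" by (simp add: Ind_01)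
    show "\<forall>p\<in>walks V E q. Dp V E p \<subseteq> oedges V E" by (simp add: Dp_def)
    show "\<forall>p\<in>walks V E q. \<forall>\<alpha>\<in>PiE (oedges V E) (\<lambda>_. words k j). \<forall>\<alpha>'\<in>PiE (oedges V E) (\<lambda>_. words k j).
           (\<forall>i\<in>Dp V E p. \<alpha> i = \<alpha>' i) \<longrightarrow> Ind \<alpha> p y = Ind \<alpha>' p y"
    proof (intro ballI impI)
      fix p and \<alpha> \<alpha>' :: "nat \<times> nat \<Rightarrow> letter list" assume p: "p \<in> walks V E q" and ag: "\<forall>i\<in>Dp V E p. \<alpha> i = \<alpha>' i"
      have "plab \<alpha> p = plab \<alpha>' p"
        by (rule plab_cong[OF G p]) (use ag in \<open>simp add: Dp_def\<close>)
      then show "Ind \<alpha> p y = Ind \<alpha>' p y" by (simp add: Ind_def)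
    qed
    show "m = (\<Sum>\<alpha>\<in>PiE (oedges V E) (\<lambda>_. words k j). \<Sum>p\<in>walks V E q. walk_weight V E p * Ind \<alpha> p y) /
        real (card (PiE (oedges V E) (\<lambda>_. words k j)))"
      using m by (simp add: labelings_def Mq_def)
  qed
  also have "\<dots> \<le> card (labelings k j V E) * ((real q + 1)\<^sup>2 * (\<Sum>v\<in>V. (nu V E v)\<^sup>2))"
    by (intro mult_left_mono overlap_bound[OF G pos]) simp
  also have "\<dots> \<le> card (labelings k j V E) * ((real q + 1)\<^sup>2 * (real d ^ 2 / (9 * real (card V))))"
    by (intro mult_left_mono nu_sq_bound[OF G degs V]) simp_all
  finally show ?thesis .
qed

lemma path_prob:
  assumes G: "simple_graph V E" and p: "p \<in> walks V E q" and dp: "distinct p"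
    and w0: "w0 \<in> words k (q * j)" and k: "k \<ge> 1"
  shows "real (card (labelings k j V E)) \<le> real (card (words k j)) ^ q * (\<Sum>\<alpha>\<in>labelings k j V E. Ind \<alpha> p (red w0))"
proof -
  let ?W = "words k j"
  let ?\<Omega> = "PiE (oedges V E) (\<lambda>_. ?W)"
  have lp: "length p = Suc q" using p by (simp add: walks_def)
  have Ep: "E (p ! i) (p ! Suc i)" if "i < q" for i using p that by (simp add: walks_def)
  define g where "g i = (if p ! i < p ! Suc i then (p ! i, p ! Suc i) else (p ! Suc i, p ! i))" for i
  define ch where "ch i = take j (drop (i * j) w0)" for i
  define A where "A = g ` {..<q}"
  have inj: "inj_on g {..<q}"
  proof (rule inj_onI)
    fix i i' assume i: "i \<in> {..<q}" "i' \<in> {..<q}" and eq: "g i = g i'"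
    have b: "i < length p" "Suc i < length p" "i' < length p" "Suc i' < length p" using i lp by auto
    show "i = i'"
      using eq b dp unfolding g_def by (auto simp: nth_eq_iff_index_eq split: if_splits)
  qed
  have AE: "A \<subseteq> oedges V E"
  proof
    fix e assume "e \<in> A"
    then obtain i where "i < q" "e = g i" by (auto simp: A_def)
    then show "e \<in> oedges V E" using oedge_orient[OF G Ep[of i]] by (simp add: g_def)
  qed
  have fW: "finite ?W" by simp
  have lw0: "length w0 = q * j" and sw0: "set w0 \<subseteq> gens k" using w0 by (auto simp: words_def)
  have chW: "ch i \<in> ?W" if "i < q" for i
  proof -
    have "i * j + j \<le> q * j" using that by (metis add.commute mult_Suc le_eq_less_or_eq mult_le_mono1 Suc_leI)
    then have "length (ch i) = j" using lw0 by (simp add: ch_def)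
    moreover have "set (ch i) \<subseteq> gens k" using sw0 unfolding ch_def
      by (meson in_set_dropD in_set_takeD subset_iff)
    ultimately show ?thesis by (simp add: words_def)
  qed
  define \<beta> where "\<beta> e = (if e \<in> A then (let i = inv_into {..<q} g e in if p ! i < p ! Suc i then ch i else winv (ch i)) else undefined)" for e
  have \<beta>g: "\<beta> (g i) = (if p ! i < p ! Suc i then ch i else winv (ch i))" if "i < q" for i
    using that inj by (simp add: \<beta>_def A_def Let_def inv_into_f_f)
  have \<beta>A: "\<beta> \<in> PiE A (\<lambda>_. ?W)"
  proof (rule PiE_I)
    fix e assume "e \<in> A"
    then obtain i where i: "i < q" "e = g i" by (auto simp: A_def)
    then show "\<beta> e \<in> ?W" using \<beta>g[OF i(1)] chW[OF i(1)] winv_words by auto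
  next
    fix e assume "e \<notin> A" then show "\<beta> e = undefined" by (simp add: \<beta>_def)
  qed
  let ?Ag = "{\<alpha> \<in> ?\<Omega>. \<forall>e\<in>A. \<alpha> e = \<beta> e}"
  have fO: "finite ?\<Omega>" using finite_oedges[OF G] by (simp add: finite_PiE)
  have ca: "card ?Ag * card (PiE A (\<lambda>_. ?W)) = card ?\<Omega>"
    by (rule card_agree[OF finite_oedges[OF G] AE \<beta>A fW])
  have fA: "finite A" by (simp add: A_def)
  have cA: "card A \<le> q" unfolding A_def using card_image_le[of "{..<q}" g] by simp
  have cPA: "card (PiE A (\<lambda>_. ?W)) \<le> card ?W ^ q"
  proof -
    have "card (PiE A (\<lambda>_. ?W)) = card ?W ^ card A" using fA by (rule card_PiE_const)
    also have "\<dots> \<le> card ?W ^ q"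
      using cA words_ne[OF k] fW by (intro power_increasing) (auto simp: Suc_le_eq card_gt_0_iff)
    finally show ?thesis .
  qed
  have Ag1: "Ind \<alpha> p (red w0) = 1" if \<alpha>: "\<alpha> \<in> ?Ag" for \<alpha>
  proof -
    have el: "elab \<alpha> (p ! i) (p ! Suc i) = ch i" if i: "i < q" for i
    proof -
      have "g i \<in> A" using i by (simp add: A_def)
      then have "\<alpha> (g i) = \<beta> (g i)" using \<alpha> by blast
      then have ag: "\<alpha> (g i) = (if p ! i < p ! Suc i then ch i else winv (ch i))" using \<beta>g[OF i] by simp
      show ?thesis
      proof (cases "p ! i < p ! Suc i")
        case True
        then have "g i = (p ! i, p ! Suc i)" by (simp add: g_def)
        then show ?thesis using ag True by (simp add: elab_def)
      next
        case False
        then have "g i = (p ! Suc i, p ! i)" by (simp add: g_def)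
        then show ?thesis using ag False by (simp add: elab_def)
      qed
    qed
    have "plab \<alpha> p = concat (map ch [0..<q])"
      unfolding plab_def using lp el by (intro arg_cong[where f = concat] map_cong) auto
    also have "\<dots> = w0" unfolding ch_def by (rule chunks_concat[OF lw0])
    finally show ?thesis by (simp add: Ind_def)
  qed
  have "real (card ?Ag) = (\<Sum>\<alpha>\<in>?Ag. Ind \<alpha> p (red w0))" using Ag1 by simp
  also have "\<dots> \<le> (\<Sum>\<alpha>\<in>?\<Omega>. Ind \<alpha> p (red w0))"
    by (rule sum_mono2[OF fO]) (auto simp: Ind_def)
  finally have s: "real (card ?Ag) \<le> (\<Sum>\<alpha>\<in>?\<Omega>. Ind \<alpha> p (red w0))" .
  have "real (card ?\<Omega>) = real (card ?Ag * card (PiE A (\<lambda>_. ?W)))"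
    using ca by simp
  also have "\<dots> = real (card ?Ag) * real (card (PiE A (\<lambda>_. ?W)))"
    by (rule of_nat_mult)
  also have "\<dots> \<le> real (card ?Ag) * real (card ?W ^ q)"
    by (intro mult_left_mono) (use cPA in auto)
  also have "\<dots> \<le> (\<Sum>\<alpha>\<in>?\<Omega>. Ind \<alpha> p (red w0)) * real (card ?W ^ q)"
    by (intro mult_right_mono s) simp
  finally show ?thesis by (simp add: labelings_def mult.commute)
qed

lemma sum_Mq:
  "(\<Sum>\<alpha>\<in>\<Omega>. Mq V E q y \<alpha>) = (\<Sum>p\<in>walks V E q. walk_weight V E p * (\<Sum>\<alpha>\<in>\<Omega>. Ind \<alpha> p y))"
  unfolding Mq_def by (subst sum.swap) (simp add: sum_distrib_left)

lemma weight_lower: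
  assumes G: "simple_graph V E" and degs: "\<forall>u\<in>V. 3 \<le> deg V E u \<and> deg V E u \<le> d" and V: "V \<noteq> {}"
    and p: "p \<in> walks V E q"
  shows "3 / (real d * real (card V)) * (1 / real d) ^ q \<le> walk_weight V E p"
proof -
  have fV: "finite V" using G by (rule sg_finite)
  have lp: "length p = Suc q" using p by (simp add: walks_def)
  have pos: "\<forall>u\<in>V. deg V E u > 0" using degs by auto
  have c: "card (oedges V E) > 0" by (rule card_oedges_pos[OF G pos V])
  have "(\<Sum>u\<in>V. deg V E u) \<le> (\<Sum>u\<in>V. d)" using degs by (intro sum_mono) auto
  then have e: "2 * real (card (oedges V E)) \<le> real d * real (card V)"
    using handshake[OF G] by (simp add: mult.commute) (metis of_nat_le_iff of_nat_mult of_nat_numeral)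
  have p0: "p ! 0 \<in> V" using walks_nth_V[OF p] by simp
  have d1: "3 / (real d * real (card V)) \<le> real (deg V E (p ! 0)) / (2 * real (card (oedges V E)))"
  proof -
    have "3 / (real d * real (card V)) \<le> 3 / (2 * real (card (oedges V E)))"
      using e c by (intro divide_left_mono) auto
    also have "\<dots> \<le> real (deg V E (p ! 0)) / (2 * real (card (oedges V E)))"
      using degs p0 c by (intro divide_right_mono) auto
    finally show ?thesis .
  qed
  have d2: "(1 / real d) ^ q \<le> (\<Prod>i<length p - 1. 1 / real (deg V E (p ! i)))"
  proof -
    have "(1 / real d) ^ q = (\<Prod>i<q. 1 / real d)" by simp
    also have "\<dots> \<le> (\<Prod>i<q. 1 / real (deg V E (p ! i)))"
    proof (intro prod_mono conjI)
      fix i assume "i \<in> {..<q}"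
      then have "p ! i \<in> V" using walks_nth_V[OF p, of i] by simp
      then have "0 < deg V E (p ! i)" "deg V E (p ! i) \<le> d" using degs by auto
      then show "0 \<le> 1 / real d" "1 / real d \<le> 1 / real (deg V E (p ! i))"
        by (auto intro: divide_left_mono)
    qed
    finally show ?thesis using lp by simp
  qed
  show ?thesis unfolding walk_weight_def
    by (rule mult_mono[OF d1 d2]) (auto intro: prod_nonneg)
qed

lemma mean_lower:
  assumes G: "simple_graph V E" and degs: "\<forall>u\<in>V. 3 \<le> deg V E u \<and> deg V E u \<le> d" and V: "V \<noteq> {}"
    and cyc: "\<forall>c. is_cycle V E c \<longrightarrow> q < length c" and k: "k \<ge> 1"
    and y: "y \<in> red ` words k (q * j)"
  shows "real (card (labelings k j V E)) * 3 / (real d * (real d * real (card (words k j))) ^ q)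
         \<le> (\<Sum>\<alpha>\<in>labelings k j V E. Mq V E q y \<alpha>)"
proof -
  let ?\<Omega> = "labelings k j V E" and ?W = "words k j"
  have fV: "finite V" using G by (rule sg_finite)
  obtain w0 where w0: "w0 \<in> words k (q * j)" "y = red w0" using y by blast
  have d2: "\<forall>u\<in>V. 2 \<le> deg V E u" using degs by auto
  have "\<forall>u\<in>V. \<exists>p\<in>walks V E q. p ! 0 = u \<and> distinct p"
    using path_exists[OF G d2 cyc] by blast
  then obtain pu where pu: "\<And>u. u \<in> V \<Longrightarrow> pu u \<in> walks V E q \<and> pu u ! 0 = u \<and> distinct (pu u)"
    by metis
  have inj: "inj_on pu V" using pu by (metis inj_onI)
  define c1 where "c1 = 3 / (real d * real (card V)) * (1 / real d) ^ q"
  define c2 where "c2 = real (card ?\<Omega>) / real (card ?W) ^ q"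
  have Wpos: "real (card ?W) ^ q > 0" using words_ne[OF k] by (simp add: card_gt_0_iff)
  have SI: "c2 \<le> (\<Sum>\<alpha>\<in>?\<Omega>. Ind \<alpha> (pu u) y)" if u: "u \<in> V" for u
  proof -
    have "real (card ?\<Omega>) \<le> real (card ?W) ^ q * (\<Sum>\<alpha>\<in>?\<Omega>. Ind \<alpha> (pu u) y)"
      unfolding w0(2) by (rule path_prob[OF G _ _ w0(1) k]) (use pu[OF u] in auto)
    then show ?thesis unfolding c2_def using Wpos by (simp add: divide_le_eq mult.commute)
  qed
  have c1pos: "c1 \<ge> 0" "c2 \<ge> 0" by (simp_all add: c1_def c2_def)
  have N: "real (card V) > 0" using fV V by (simp add: card_gt_0_iff)
  have "real (card ?\<Omega>) * 3 / (real d * (real d * real (card ?W)) ^ q) = real (card V) * c1 * c2"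
    unfolding c1_def c2_def using N
    by (simp add: power_mult_distrib power_divide field_simps)
  also have "\<dots> = (\<Sum>u\<in>V. c1 * c2)" by simp
  also have "\<dots> \<le> (\<Sum>u\<in>V. walk_weight V E (pu u) * (\<Sum>\<alpha>\<in>?\<Omega>. Ind \<alpha> (pu u) y))"
  proof (intro sum_mono mult_mono)
    fix u assume u: "u \<in> V"
    show "c1 \<le> walk_weight V E (pu u)" unfolding c1_def using pu[OF u]
      by (intro weight_lower[OF G degs V]) auto
    show "c2 \<le> (\<Sum>\<alpha>\<in>?\<Omega>. Ind \<alpha> (pu u) y)" by (rule SI[OF u])
    show "0 \<le> walk_weight V E (pu u)" by (rule walk_weight_nonneg)
    show "0 \<le> c2" by (rule c1pos(2))
  qed
  also have "\<dots> = (\<Sum>p\<in>pu ` V. walk_weight V E p * (\<Sum>\<alpha>\<in>?\<Omega>. Ind \<alpha> p y))"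
    by (rule sum.reindex[OF inj, unfolded comp_def, symmetric])
  also have "\<dots> \<le> (\<Sum>p\<in>walks V E q. walk_weight V E p * (\<Sum>\<alpha>\<in>?\<Omega>. Ind \<alpha> p y))"
    by (rule sum_mono2[OF finite_walks[OF fV]]) (use pu in \<open>auto intro!: mult_nonneg_nonneg sum_nonneg walk_weight_nonneg simp: Ind_def\<close>)
  also have "\<dots> = (\<Sum>\<alpha>\<in>?\<Omega>. Mq V E q y \<alpha>)"
    by (rule sum_Mq[symmetric])
  finally show ?thesis .
qed

lemma sum_winv: "(\<Sum>s\<in>words k j. f (winv s)) = (\<Sum>s\<in>words k j. f s)"
proof -
  have "bij_betw winv (words k j) (words k j)"
    by (rule bij_betwI[where g = winv]) (auto simp: winv_words)
  then show ?thesis by (rule sum.reindex_bij_betw)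
qed

lemma sum_ind_card: "finite S \<Longrightarrow> (\<Sum>s\<in>S. if P s then 1 else 0 :: real) = real (card {s \<in> S. P s})"
  by (simp add: sum.inter_filter[symmetric])

lemma walks_1: "p \<in> walks V E 1 \<Longrightarrow> p = [p ! 0, p ! 1] \<and> E (p ! 0) (p ! 1)"
proof -
  assume p: "p \<in> walks V E 1"
  then have "length p = 2" by (simp add: walks_def)
  then obtain a b where "p = [a, b]" by (metis (no_types) length_0_conv length_Suc_conv numeral_2_eq_2)
  then show ?thesis using p by (simp add: walks_def)
qed

lemma SI_1:
  assumes G: "simple_graph V E" and p: "p \<in> walks V E 1" and k: "k \<ge> 1"
  shows "(\<Sum>\<alpha>\<in>labelings k j V E. Ind \<alpha> p y) * real (card (words k j)) =
         real (card (labelings k j V E)) * real (card {w \<in> words k j. red w = y})"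
proof -
  obtain u v where uv: "p = [u, v]" "E u v" using walks_1[OF p] by blast
  have fO: "finite (oedges V E)" by (rule finite_oedges[OF G])
  have W: "finite (words k j)" by simp
  have cnt: "(\<Sum>s\<in>words k j. if red s = y then 1 else 0 :: real) = real (card {w \<in> words k j. red w = y})"
    using sum_ind_card[OF W] .
  show ?thesis
  proof (cases "u < v")
    case True
    then have e: "(u, v) \<in> oedges V E" using oedge_orient[OF G uv(2)] by simp
    have "(\<Sum>\<alpha>\<in>labelings k j V E. Ind \<alpha> p y) = (\<Sum>\<alpha>\<in>PiE (oedges V E) (\<lambda>_. words k j). (\<lambda>s. if red s = y then 1 else 0 :: real) (\<alpha> (u, v)))"
      unfolding labelings_def Ind_def uv plab_single elab_def using True by simp
    then show ?thesis using sum_PiE_single[OF fO e W, of "\<lambda>s. if red s = y then 1 else 0"] cnt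
      by (simp add: labelings_def)
  next
    case False
    then have e: "(v, u) \<in> oedges V E" using oedge_orient[OF G uv(2)] by simp
    have "(\<Sum>\<alpha>\<in>labelings k j V E. Ind \<alpha> p y) = (\<Sum>\<alpha>\<in>PiE (oedges V E) (\<lambda>_. words k j). (\<lambda>s. if red (winv s) = y then 1 else 0 :: real) (\<alpha> (v, u)))"
      unfolding labelings_def Ind_def uv plab_single elab_def using False by simp
    moreover have "(\<Sum>s\<in>words k j. if red (winv s) = y then 1 else 0 :: real) = (\<Sum>s\<in>words k j. if red s = y then 1 else 0 :: real)"
      by (rule sum_winv)
    ultimately show ?thesis using sum_PiE_single[OF fO e W, of "\<lambda>s. if red (winv s) = y then 1 else 0"] cnt
      by (simp add: labelings_def)
  qed
qed

lemma mean_1: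
  assumes G: "simple_graph V E" and pos: "\<forall>u\<in>V. deg V E u > 0" and V: "V \<noteq> {}" and k: "k \<ge> 1"
  shows "(\<Sum>\<alpha>\<in>labelings k j V E. Mq V E 1 y \<alpha>) =
         real (card (labelings k j V E)) * real (card {w \<in> words k j. red w = y}) / real (card (words k j))"
proof -
  define c where "c = real (card (labelings k j V E)) * real (card {w \<in> words k j. red w = y}) / real (card (words k j))"
  have Wpos: "real (card (words k j)) > 0" using words_ne[OF k] by (simp add: card_gt_0_iff)
  have "(\<Sum>\<alpha>\<in>labelings k j V E. Mq V E 1 y \<alpha>) = (\<Sum>p\<in>walks V E 1. walk_weight V E p * c)"
  proof -
    have "(\<Sum>\<alpha>\<in>labelings k j V E. Ind \<alpha> p y) = c" if p: "p \<in> walks V E 1" for p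
      using SI_1[OF G p k, of y j] Wpos words_ne[OF k, of j] unfolding c_def by (simp add: eq_divide_eq)
    then show ?thesis unfolding sum_Mq by simp
  qed
  also have "\<dots> = c" using total_weight[OF G pos V, of 1] by (simp add: sum_distrib_right[symmetric])
  finally show ?thesis by (simp add: c_def)
qed

lemma muGa_Mq: "reduced x' \<Longrightarrow> muGa V E \<alpha> q x x' = Mq V E q (red (winv x @ x')) \<alpha>"
  unfolding muGa_def Mq_def Ind_def by (simp add: red_key)

lemma mubar_Mq: "reduced x' \<Longrightarrow>
    mubar k j V E q x x' = (\<Sum>\<alpha>\<in>labelings k j V E. Mq V E q (red (winv x @ x')) \<alpha>) / card (labelings k j V E)"
  unfolding mubar_def by (simp add: muGa_Mq)

lemma muX_eq: "reduced x' \<Longrightarrow>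
    muX k j x x' = real (card {w \<in> words k j. red w = red (winv x @ x')}) / real (card (words k j))"
  unfolding muX_def by (simp add: red_key card_words)

lemma bad_qy:
  assumes G: "simple_graph V E" and degs: "\<forall>u\<in>V. 3 \<le> deg V E u \<and> deg V E u \<le> d" and V: "V \<noteq> {}"
    and cyc: "\<forall>c. is_cycle V E c \<longrightarrow> q < length c" and k: "k \<ge> 1"
    and y: "y \<in> red ` words k (q * j)"
    and mu: "\<mu> = (\<Sum>\<alpha>\<in>labelings k j V E. Mq V E q y \<alpha>) / card (labelings k j V E)"
  shows "real (card {\<alpha> \<in> labelings k j V E. \<mu> / 2 \<le> \<bar>Mq V E q y \<alpha> - \<mu>\<bar>})
    \<le> real (card (labelings k j V E)) * (4 * real d ^ 4 / 81) * (real q + 1)\<^sup>2 * ((real d * real (card (words k j))) ^ q)\<^sup>2 / real (card V)"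
proof -
  let ?\<Omega> = "labelings k j V E"
  have fV: "finite V" using G by (rule sg_finite)
  have N: "real (card V) > 0" using fV V by (simp add: card_gt_0_iff)
  obtain u where "u \<in> V" using V by blast
  then have d3: "real d \<ge> 3" using degs by force
  have fO: "finite ?\<Omega>" using finite_oedges[OF G] by (simp add: labelings_def finite_PiE)
  have cO: "real (card ?\<Omega>) > 0" using fO words_ne[OF k] finite_oedges[OF G]
    by (simp add: labelings_def card_gt_0_iff PiE_eq_empty_iff)
  define Wn where "Wn = real (card (words k j))"
  have Wn: "Wn \<ge> 1" using words_ne[OF k] by (simp add: Wn_def card_gt_0_iff Suc_le_eq)
  define L where "L = 3 / (real d * (real d * Wn) ^ q)"
  have Lpos: "L > 0" using d3 Wn by (simp add: L_def)
  have "real (card ?\<Omega>) * 3 / (real d * (real d * Wn) ^ q) \<le> (\<Sum>\<alpha>\<in>?\<Omega>. Mq V E q y \<alpha>)"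
    unfolding Wn_def by (rule mean_lower[OF G degs V cyc k y])
  then have Lmu: "L \<le> \<mu>" unfolding mu L_def using cO by (simp add: le_divide_eq field_simps)
  define X where "X = real (card ?\<Omega>) * ((real q + 1)\<^sup>2 * (real d ^ 2 / (9 * real (card V))))"
  have X0: "X \<ge> 0" by (simp add: X_def)
  have h1: "real (card {\<alpha> \<in> ?\<Omega>. \<mu> / 2 \<le> \<bar>Mq V E q y \<alpha> - \<mu>\<bar>}) * (\<mu> / 2)\<^sup>2 \<le> X"
  proof -
    have "real (card {\<alpha> \<in> ?\<Omega>. \<mu> / 2 \<le> \<bar>Mq V E q y \<alpha> - \<mu>\<bar>}) * (\<mu> / 2)\<^sup>2 \<le> (\<Sum>\<alpha>\<in>?\<Omega>. (Mq V E q y \<alpha> - \<mu>)\<^sup>2)"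
      by (rule cheb[OF fO]) (use Lpos Lmu in simp)
    also have "\<dots> \<le> X" unfolding X_def by (rule Mq_var[OF G degs V k mu])
    finally show ?thesis .
  qed
  have mpos: "(\<mu> / 2)\<^sup>2 > 0" using Lpos Lmu by simp
  have "real (card {\<alpha> \<in> ?\<Omega>. \<mu> / 2 \<le> \<bar>Mq V E q y \<alpha> - \<mu>\<bar>}) \<le> X / (\<mu> / 2)\<^sup>2"
    using h1 mpos by (simp add: le_divide_eq)
  also have "\<dots> \<le> X / (L / 2)\<^sup>2"
    using X0 Lpos Lmu by (intro divide_left_mono power_mono mult_pos_pos) auto
  also have "\<dots> = real (card ?\<Omega>) * (4 * real d ^ 4 / 81) * (real q + 1)\<^sup>2 * ((real d * Wn) ^ q)\<^sup>2 / real (card V)"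
    unfolding X_def L_def using N d3 Wn by (simp add: power_divide power_mult_distrib field_simps)
  finally show ?thesis unfolding Wn_def .
qed

lemma Mq_zero:
  assumes G: "simple_graph V E" and \<alpha>: "\<alpha> \<in> labelings k j V E" and y: "y \<notin> red ` words k (q * j)"
  shows "Mq V E q y \<alpha> = 0"
proof -
  have "Ind \<alpha> p y = 0" if p: "p \<in> walks V E q" for p
  proof -
    have "plab \<alpha> p \<in> words k (q * j)" by (rule plab_words[OF G p \<alpha>])
    then have "red (plab \<alpha> p) \<noteq> y" using y by blast
    then show ?thesis by (simp add: Ind_def)
  qed
  then show ?thesis by (simp add: Mq_def)
qed

lemma good_eff:
  assumes G: "simple_graph V E" and degs: "\<forall>u\<in>V. 3 \<le> deg V E u \<and> deg V E u \<le> d" and V: "V \<noteq> {}"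
    and k: "k \<ge> 1" and \<alpha>: "\<alpha> \<in> labelings k j V E" and Q1: "1 \<le> Q"
    and mu: "\<And>q y. mu q y = (\<Sum>\<alpha>\<in>labelings k j V E. Mq V E q y \<alpha>) / card (labelings k j V E)"
    and good: "\<forall>q\<in>{1..Q}. \<forall>y\<in>red ` words k (q * j). \<bar>Mq V E q y \<alpha> - mu q y\<bar> < mu q y / 2"
    and qQ: "\<And>q. 1 \<le> q \<Longrightarrow> real q \<le> q0 \<Longrightarrow> q \<le> Q"
  shows "eff_sim k j V E \<alpha> q0"
  unfolding eff_sim_def
proof (intro conjI allI impI ballI)
  fix q :: nat and x x' assume q: "1 \<le> q \<and> real q \<le> q0" and x: "x \<in> FG k" and x': "x' \<in> FG k"
  have r: "reduced x'" using x' by (simp add: FG_def)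
  define y where "y = red (winv x @ x')"
  have e1: "muGa V E \<alpha> q x x' = Mq V E q y \<alpha>" unfolding y_def by (rule muGa_Mq[OF r])
  have e2: "mubar k j V E q x x' = mu q y" unfolding y_def mu by (rule mubar_Mq[OF r])
  show "mubar k j V E q x x' / 2 \<le> muGa V E \<alpha> q x x'"
  proof (cases "y \<in> red ` words k (q * j)")
    case True
    have "q \<in> {1..Q}" using q qQ by auto
    then have "\<bar>Mq V E q y \<alpha> - mu q y\<bar> < mu q y / 2" using good True by blast
    then show ?thesis unfolding e1 e2 by linarith
  next
    case False
    have "\<forall>\<beta>\<in>labelings k j V E. Mq V E q y \<beta> = 0" using Mq_zero[OF G _ False] by blast
    then have "mu q y = 0" unfolding mu by simp
    then show ?thesis unfolding e1 e2 using Mq_zero[OF G \<alpha> False] by simp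
  qed
next
  fix x x' assume x: "x \<in> FG k" and x': "x' \<in> FG k"
  have r: "reduced x'" using x' by (simp add: FG_def)
  define y where "y = red (winv x @ x')"
  have e1: "muGa V E \<alpha> 1 x x' = Mq V E 1 y \<alpha>" unfolding y_def by (rule muGa_Mq[OF r])
  have pos: "\<forall>u\<in>V. deg V E u > 0" using degs by auto
  have cO: "real (card (labelings k j V E)) > 0" using words_ne[OF k] finite_oedges[OF G]
    by (simp add: labelings_def card_gt_0_iff PiE_eq_empty_iff finite_PiE)
  have e3: "mu 1 y = muX k j x x'"
    unfolding mu mean_1[OF G pos V k] muX_eq[OF r] y_def using cO by simp
  have mX: "muX k j x x' \<ge> 0" by (simp add: muX_def)
  show "muGa V E \<alpha> 1 x x' \<le> 2 * muX k j x x'"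
  proof (cases "y \<in> red ` words k (1 * j)")
    case True
    have "1 \<in> {1..Q}" using Q1 by auto
    then have "\<bar>Mq V E 1 y \<alpha> - mu 1 y\<bar> < mu 1 y / 2" using good True by blast
    then show ?thesis unfolding e1 e3[symmetric] by linarith
  next
    case False
    then show ?thesis unfolding e1 using Mq_zero[OF G \<alpha> False] mX by simp
  qed
qed

lemma card_UN_le_real: "finite I \<Longrightarrow> real (card (\<Union>i\<in>I. A i)) \<le> (\<Sum>i\<in>I. real (card (A i)))"
  by (simp only: of_nat_sum[symmetric] of_nat_le_iff) (rule card_UN_le)

lemma pw2: "((a::real)^2*b^3)^q = b^q * ((a*b)^q)^2"
proof -
  have e1: "(a^2)^q = (a^q)^2" "(b^3)^q = (b^q)^3" by (simp_all only: power_mult[symmetric] mult.commute)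
  have "(a^2*b^3)^q = (a^q)^2 * (b^q)^3" by (simp only: power_mult_distrib e1)
  also have "\<dots> = b^q * ((a*b)^q)^2" by (simp add: power_mult_distrib power2_eq_square power3_eq_cube)
  finally show ?thesis .
qed

lemma fail_bound:
  assumes G: "simple_graph V E" and degs: "\<forall>u\<in>V. 3 \<le> deg V E u \<and> deg V E u \<le> d" and V: "V \<noteq> {}"
    and k: "k \<ge> 1" and Q1: "1 \<le> Q"
    and cycQ: "\<And>q c. q \<in> {1..Q} \<Longrightarrow> is_cycle V E c \<Longrightarrow> q < length c"
    and qQ: "\<And>q. 1 \<le> q \<Longrightarrow> real q \<le> q0 \<Longrightarrow> q \<le> Q"
  shows "fail_prob k j V E q0 \<le> (4 * real d ^ 4 / 81) * (real Q + 1) ^ 3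
           * (real d ^ 2 * real (card (words k j)) ^ 3) ^ Q / real (card V)"
proof -
  let ?\<Omega> = "labelings k j V E"
  define mu where "mu q y = (\<Sum>\<alpha>\<in>?\<Omega>. Mq V E q y \<alpha>) / card ?\<Omega>" for q y
  define Bq where "Bq q y = {\<alpha> \<in> ?\<Omega>. mu q y / 2 \<le> \<bar>Mq V E q y \<alpha> - mu q y\<bar>}" for q y
  define Y where "Y q = red ` words k (q * j)" for q
  define Wn where "Wn = real (card (words k j))"
  define c where "c = 4 * real d ^ 4 / 81"
  define T where "T q = real (card ?\<Omega>) * c * (real q + 1)\<^sup>2 * ((real d * Wn) ^ q)\<^sup>2 / real (card V)" for q :: nat
  have fV: "finite V" using G by (rule sg_finite)
  have N: "real (card V) > 0" using fV V by (simp add: card_gt_0_iff)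
  have fO: "finite ?\<Omega>" using finite_oedges[OF G] by (simp add: labelings_def finite_PiE)
  have cO: "real (card ?\<Omega>) > 0" using words_ne[OF k] finite_oedges[OF G]
    by (simp add: labelings_def card_gt_0_iff PiE_eq_empty_iff finite_PiE)
  have Wn: "Wn \<ge> 1" using words_ne[OF k] by (simp add: Wn_def card_gt_0_iff Suc_le_eq)
  obtain u where "u \<in> V" using V by blast
  then have d3: "real d \<ge> 3" using degs by force
  have sub: "{\<alpha> \<in> ?\<Omega>. \<not> eff_sim k j V E \<alpha> q0} \<subseteq> (\<Union>q\<in>{1..Q}. \<Union>y\<in>Y q. Bq q y)"
  proof
    fix \<alpha> assume a: "\<alpha> \<in> {\<alpha> \<in> ?\<Omega>. \<not> eff_sim k j V E \<alpha> q0}"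
    show "\<alpha> \<in> (\<Union>q\<in>{1..Q}. \<Union>y\<in>Y q. Bq q y)"
    proof (rule ccontr)
      assume "\<alpha> \<notin> (\<Union>q\<in>{1..Q}. \<Union>y\<in>Y q. Bq q y)"
      then have good: "\<forall>q\<in>{1..Q}. \<forall>y\<in>red ` words k (q * j). \<bar>Mq V E q y \<alpha> - mu q y\<bar> < mu q y / 2"
        using a by (auto simp: Bq_def Y_def not_le)
      have "eff_sim k j V E \<alpha> q0"
        by (rule good_eff[OF G degs V k _ Q1 mu_def good qQ]) (use a in auto)
      then show False using a by simp
    qed
  qed
  have fY: "finite (Y q)" for q by (simp add: Y_def)
  have cY: "real (card (Y q)) \<le> Wn ^ q" for q
  proof -
    have "card (Y q) \<le> card (words k (q * j))" unfolding Y_def by (rule card_image_le) simp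
    also have "\<dots> = card (words k j) ^ q" by (simp add: card_words power_mult mult.commute)
    finally show ?thesis unfolding Wn_def by (metis of_nat_le_iff of_nat_power)
  qed
  have TB: "Wn ^ q * T q \<le> real (card ?\<Omega>) * c * (real Q + 1)\<^sup>2 * (real d ^ 2 * Wn ^ 3) ^ Q / real (card V)"
    if q: "q \<in> {1..Q}" for q
  proof -
    have "Wn ^ q * T q = real (card ?\<Omega>) * c * (real q + 1)\<^sup>2 * (Wn ^ q * ((real d * Wn) ^ q)\<^sup>2) / real (card V)"
      unfolding T_def by (simp only: times_divide_eq_right mult_ac)
    also have "\<dots> = real (card ?\<Omega>) * c * (real q + 1)\<^sup>2 * (real d ^ 2 * Wn ^ 3) ^ q / real (card V)"
      by (simp only: pw2)
    also have "\<dots> \<le> real (card ?\<Omega>) * c * (real Q + 1)\<^sup>2 * (real d ^ 2 * Wn ^ 3) ^ Q / real (card V)"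
    proof -
      have b1: "real d ^ 2 \<ge> 1" using d3 by (simp add: one_le_power)
      have b2: "Wn ^ 3 \<ge> 1" using Wn by (simp add: one_le_power)
      have "1 * 1 \<le> real d ^ 2 * Wn ^ 3" by (rule mult_mono[OF b1 b2]) auto
      then have B1: "real d ^ 2 * Wn ^ 3 \<ge> 1" by simp
      have "(real q + 1)\<^sup>2 \<le> (real Q + 1)\<^sup>2" using q by (intro power_mono) auto
      moreover have "(real d ^ 2 * Wn ^ 3) ^ q \<le> (real d ^ 2 * Wn ^ 3) ^ Q"
        using q B1 by (intro power_increasing) auto
      moreover have "0 \<le> (real d ^ 2 * Wn ^ 3) ^ q" using Wn by simp
      ultimately show ?thesis using cO N
        by (intro divide_right_mono mult_mono mult_nonneg_nonneg) (auto simp: c_def)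
    qed
    finally show ?thesis .
  qed
  have "real (card {\<alpha> \<in> ?\<Omega>. \<not> eff_sim k j V E \<alpha> q0}) \<le> real (card (\<Union>q\<in>{1..Q}. \<Union>y\<in>Y q. Bq q y))"
  proof -
    have "(\<Union>q\<in>{1..Q}. \<Union>y\<in>Y q. Bq q y) \<subseteq> ?\<Omega>" by (auto simp: Bq_def)
    then have finU: "finite (\<Union>q\<in>{1..Q}. \<Union>y\<in>Y q. Bq q y)" using fO by (rule finite_subset)
    show ?thesis by (rule of_nat_mono, rule card_mono[OF finU sub])
  qed
  also have "\<dots> \<le> (\<Sum>q\<in>{1..Q}. real (card (\<Union>y\<in>Y q. Bq q y)))"
    by (rule card_UN_le_real) simp
  also have "\<dots> \<le> (\<Sum>q\<in>{1..Q}. \<Sum>y\<in>Y q. real (card (Bq q y)))"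
  proof (intro sum_mono)
    fix q show "real (card (\<Union>y\<in>Y q. Bq q y)) \<le> (\<Sum>y\<in>Y q. real (card (Bq q y)))"
      by (rule card_UN_le_real[OF fY])
  qed
  also have "\<dots> \<le> (\<Sum>q\<in>{1..Q}. \<Sum>y\<in>Y q. T q)"
  proof (intro sum_mono)
    fix q y assume q: "q \<in> {1..Q}" and y: "y \<in> Y q"
    have cyc: "\<forall>c. is_cycle V E c \<longrightarrow> q < length c" using cycQ[OF q] by blast
    show "real (card (Bq q y)) \<le> T q" unfolding Bq_def T_def c_def Wn_def
      by (rule bad_qy[OF G degs V cyc k _ mu_def]) (use y in \<open>simp add: Y_def\<close>)
  qed
  also have "\<dots> = (\<Sum>q\<in>{1..Q}. real (card (Y q)) * T q)" by simp
  also have "\<dots> \<le> (\<Sum>q\<in>{1..Q}. Wn ^ q * T q)"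
    using cY by (intro sum_mono mult_right_mono) (auto simp: T_def c_def)
  also have "\<dots> \<le> (\<Sum>q\<in>{1..Q}. real (card ?\<Omega>) * c * (real Q + 1)\<^sup>2 * (real d ^ 2 * Wn ^ 3) ^ Q / real (card V))"
    using TB by (intro sum_mono) auto
  also have "\<dots> = real Q * (real (card ?\<Omega>) * c * (real Q + 1)\<^sup>2 * (real d ^ 2 * Wn ^ 3) ^ Q / real (card V))"
    by simp
  also have "\<dots> \<le> (real Q + 1) * (real (card ?\<Omega>) * c * (real Q + 1)\<^sup>2 * (real d ^ 2 * Wn ^ 3) ^ Q / real (card V))"
    using cO N Wn by (intro mult_right_mono) (auto simp: c_def)
  finally have "real (card {\<alpha> \<in> ?\<Omega>. \<not> eff_sim k j V E \<alpha> q0}) \<le>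
     real (card ?\<Omega>) * (c * (real Q + 1) ^ 3 * (real d ^ 2 * Wn ^ 3) ^ Q / real (card V))"
    by (simp add: power2_eq_square power3_eq_cube mult_ac)
  then show ?thesis unfolding fail_prob_def c_def Wn_def using cO
    by (simp add: divide_le_eq mult.commute)
qed

lemma fail_le_1: "simple_graph V E \<Longrightarrow> fail_prob k j V E q0 \<le> 1"
proof -
  assume G: "simple_graph V E"
  have fO: "finite (labelings k j V E)" using finite_oedges[OF G] by (simp add: labelings_def finite_PiE)
  have "card {\<alpha> \<in> labelings k j V E. \<not> eff_sim k j V E \<alpha> q0} \<le> card (labelings k j V E)"
    using fO by (intro card_mono) auto
  then show ?thesis unfolding fail_prob_def
    by (cases "card (labelings k j V E) = 0") (auto simp: divide_le_eq)
qed

lemma girth_le: "is_cycle V E c \<Longrightarrow> girth V E \<le> length c"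
  unfolding girth_def by (rule Least_le) blast

lemma asym: "(\<lambda>n::nat. (1 + ln (real n))^3 / sqrt (real n)) \<longlonglongrightarrow> 0" by real_asymp

theorem proposition7p4:
  fixes d k j :: nat and C :: real
  assumes "d \<ge> 3" and "k \<ge> 1" and "j \<ge> 1" and "C > 0"
  shows "\<exists>C' > 0. \<exists>\<epsilon> :: nat \<Rightarrow> real.
           (\<forall>N. 0 \<le> \<epsilon> N \<and> \<epsilon> N \<le> 1) \<and> \<epsilon> \<longlonglongrightarrow> 0 \<and>
           (\<forall>(V :: nat set) (E :: nat \<Rightarrow> nat \<Rightarrow> bool).
              simple_graph V E \<and>
              (\<forall>u\<in>V. 3 \<le> deg V E u \<and> deg V E u \<le> d) \<and>
              real (girth V E) \<ge> C * ln (real (card V))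
              \<longrightarrow> fail_prob k j V E (C' * ln (real (card V))) \<le> \<epsilon> (card V))"
proof -
  note d = assms(1) and k = assms(2) and Cpos = assms(4)
  define Wn where "Wn = real (card (words k j))"
  have Wn: "Wn \<ge> 1" using words_ne[OF k] by (simp add: Wn_def card_gt_0_iff Suc_le_eq)
  define B where "B = real d ^ 2 * Wn ^ 3"
  have B9: "B \<ge> 9"
  proof -
    have "real d \<ge> 3" using d by simp
    then have "real d ^ 2 \<ge> 3 ^ 2" by (rule power_mono) simp
    then have "real d ^ 2 \<ge> 9" by simp
    moreover have "Wn ^ 3 \<ge> 1" using Wn by (simp add: one_le_power)
    ultimately have "9 * 1 \<le> real d ^ 2 * Wn ^ 3" by (intro mult_mono) auto
    then show ?thesis by (simp add: B_def)
  qed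
  have lnB: "ln B > 0" using B9 by simp
  define C' where "C' = min (C / 2) (1 / (2 * ln B))"
  have C'pos: "C' > 0" using Cpos lnB by (simp add: C'_def)
  have C'C: "C' \<le> C / 2" by (simp add: C'_def)
  have C'B: "C' * ln B \<le> 1 / 2"
  proof -
    have "C' * ln B \<le> 1 / (2 * ln B) * ln B" using lnB by (intro mult_right_mono) (auto simp: C'_def)
    then show ?thesis using lnB by simp
  qed
  define K where "K = 4 * real d ^ 4 / 81 * B"
  have K0: "K \<ge> 0" using B9 by (simp add: K_def)
  define f where "f N = K * (2 + C' * ln (real N)) ^ 3 / sqrt (real N)" for N :: nat
  define \<epsilon> where "\<epsilon> N = (if N = 0 then 1 else min 1 (f N))" for N
  have f0: "f N \<ge> 0" if "N \<ge> 1" for N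
  proof -
    have "ln (real N) \<ge> 0" using that by simp
    then have "2 + C' * ln (real N) \<ge> 0" using C'pos by simp
    then show ?thesis using K0 by (simp add: f_def)
  qed
  have eps01: "\<forall>N. 0 \<le> \<epsilon> N \<and> \<epsilon> N \<le> 1"
    using f0 by (auto simp: \<epsilon>_def)
  have eps0: "\<epsilon> \<longlonglongrightarrow> 0"
  proof -
    define g where "g n = (1 + ln (real n))^3 / sqrt (real n)" for n :: nat
    have g: "g \<longlonglongrightarrow> 0" unfolding g_def by (rule asym)
    have g2: "(\<lambda>n. K * (2 + C') ^ 3 * g n) \<longlonglongrightarrow> 0"
      using tendsto_mult_right_zero[OF g, of "K * (2 + C') ^ 3"] by simp
    have fle: "f n \<le> K * (2 + C') ^ 3 * g n" if n: "n \<ge> 1" for n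
    proof -
      have l: "ln (real n) \<ge> 0" using n by simp
      have a: "0 \<le> 2 + C' * ln (real n)" using l C'pos by simp
      have "2 + C' * ln (real n) \<le> (2 + C') * (1 + ln (real n))"
        using l C'pos by (simp add: algebra_simps)
      then have "(2 + C' * ln (real n)) ^ 3 \<le> ((2 + C') * (1 + ln (real n))) ^ 3"
        using a by (rule power_mono)
      then have "K * (2 + C' * ln (real n)) ^ 3 \<le> K * ((2 + C') * (1 + ln (real n))) ^ 3"
        using K0 by (rule mult_left_mono)
      then have "K * (2 + C' * ln (real n)) ^ 3 / sqrt (real n) \<le> K * ((2 + C') * (1 + ln (real n))) ^ 3 / sqrt (real n)"
        by (rule divide_right_mono) simp
      then show ?thesis by (simp add: f_def g_def power_mult_distrib)
    qed
    have ft: "f \<longlonglongrightarrow> 0"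
      by (rule tendsto_sandwich[OF _ _ tendsto_const g2])
         (use f0 fle in \<open>auto simp: eventually_sequentially\<close>)
    have "(\<lambda>n. min 1 (f n)) \<longlonglongrightarrow> min 1 0"
      by (rule tendsto_min[OF tendsto_const ft])
    then have m: "(\<lambda>n. min 1 (f n)) \<longlonglongrightarrow> 0" by simp
    show ?thesis
      by (rule Lim_transform_eventually[OF m])
         (auto simp: \<epsilon>_def eventually_sequentially intro!: exI[of _ 1])
  qed
  have main: "fail_prob k j V E (C' * ln (real (card V))) \<le> \<epsilon> (card V)"
    if G: "simple_graph V E" and degs: "\<forall>u\<in>V. 3 \<le> deg V E u \<and> deg V E u \<le> d"
      and gir: "real (girth V E) \<ge> C * ln (real (card V))" for V E
  proof (cases "V = {}")
    case True
    then show ?thesis using fail_le_1[OF G] by (simp add: \<epsilon>_def)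
  next
    case False
    note V = False
    define N where "N = card V"
    have fV: "finite V" using G by (rule sg_finite)
    have N1: "N \<ge> 1" using fV V by (simp add: N_def Suc_le_eq card_gt_0_iff)
    have lnN: "ln (real N) \<ge> 0" using N1 by simp
    define Q where "Q = max 1 (nat \<lfloor>C' * ln (real N)\<rfloor>)"
    have Q1: "1 \<le> Q" by (simp add: Q_def)
    have QbigQ: "real Q \<le> C' * ln (real N)" if "Q \<noteq> 1"
    proof -
      have Qe: "Q = nat \<lfloor>C' * ln (real N)\<rfloor>" using that by (simp add: Q_def max_def split: if_splits)
      then have z: "\<lfloor>C' * ln (real N)\<rfloor> \<ge> 0" using Q1 by linarith
      have "real Q = real_of_int \<lfloor>C' * ln (real N)\<rfloor>" using Qe z by simp
      also have "\<dots> \<le> C' * ln (real N)" by (rule of_int_floor_le)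
      finally show ?thesis .
    qed
    have qQ: "q \<le> Q" if "1 \<le> q" "real q \<le> C' * ln (real (card V))" for q
    proof -
      have "int q \<le> \<lfloor>C' * ln (real N)\<rfloor>" using that by (simp add: N_def le_floor_iff)
      then show ?thesis by (simp add: Q_def)
    qed
    have cycQ: "q < length c" if q: "q \<in> {1..Q}" and c: "is_cycle V E c" for q c
    proof (cases "q \<le> 2")
      case True
      then show ?thesis using c by (simp add: is_cycle_def)
    next
      case False
      then have "Q \<noteq> 1" using q by auto
      then have RQ: "real Q \<le> C' * ln (real N)" by (rule QbigQ)
      have "real q \<le> real Q" using q by simp
      have "3 \<le> real Q" using False q by simp
      then have "ln (real N) > 0" using RQ C'pos by (smt (verit) mult_nonneg_nonpos)
      then have "C' * ln (real N) < C * ln (real N)" using C'C Cpos by simp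
      moreover have "C * ln (real N) \<le> real (length c)"
        using gir girth_le[OF c] unfolding N_def by (smt (verit) of_nat_le_iff)
      ultimately show ?thesis using \<open>real q \<le> real Q\<close> RQ by simp
    qed
    have fb: "fail_prob k j V E (C' * ln (real (card V))) \<le> (4 * real d ^ 4 / 81) * (real Q + 1) ^ 3 * B ^ Q / real N"
      unfolding B_def Wn_def N_def
      by (rule fail_bound[OF G degs V k Q1 cycQ qQ])
    have BQ: "B ^ Q \<le> B * sqrt (real N)"
    proof (cases "Q = 1")
      case True
      have "sqrt (real N) \<ge> 1" using N1 by simp
      then have "B * 1 \<le> B * sqrt (real N)" using B9 by (intro mult_left_mono) auto
      then show ?thesis using True by simp
    next
      case False
      have RQ: "real Q \<le> C' * ln (real N)" by (rule QbigQ[OF False])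
      have "B ^ Q = B powr real Q" using B9 by (simp add: powr_realpow)
      also have "\<dots> \<le> B powr (C' * ln (real N))" using B9 RQ by (intro powr_mono) auto
      also have "\<dots> \<le> B powr (ln (real N) / (2 * ln B))"
      proof (intro powr_mono)
        have "C' * ln (real N) \<le> 1 / (2 * ln B) * ln (real N)"
          using lnN by (intro mult_right_mono) (auto simp: C'_def)
        then show "C' * ln (real N) \<le> ln (real N) / (2 * ln B)" by simp
      qed (use B9 in auto)
      also have "\<dots> = exp (ln (real N) / (2 * ln B) * ln B)" using B9 by (simp add: powr_def)
      also have "\<dots> = exp (ln (real N) / 2)" using lnB by simp
      also have "\<dots> = real N powr (1 / 2)" using N1 by (simp add: powr_def)
      also have "\<dots> = sqrt (real N)" by (simp add: powr_half_sqrt)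
      also have "\<dots> \<le> B * sqrt (real N)"
      proof -
        have "1 * sqrt (real N) \<le> B * sqrt (real N)" by (rule mult_right_mono) (use B9 in auto)
        then show ?thesis by simp
      qed
      finally show ?thesis .
    qed
    have Q2: "real Q + 1 \<le> 2 + C' * ln (real N)"
    proof (cases "Q = 1")
      case True then show ?thesis using C'pos lnN by simp
    next
      case False then show ?thesis using QbigQ by simp
    qed
    have sN: "sqrt (real N) > 0" using N1 by simp
    have "(4 * real d ^ 4 / 81) * (real Q + 1) ^ 3 * B ^ Q / real N
          \<le> (4 * real d ^ 4 / 81) * (2 + C' * ln (real N)) ^ 3 * (B * sqrt (real N)) / real N"
      using Q2 BQ B9 by (intro divide_right_mono mult_mono power_mono mult_nonneg_nonneg) auto
    also have "\<dots> = f N"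
    proof -
      have "real N = sqrt (real N) * sqrt (real N)" using N1 by simp
      then show ?thesis unfolding f_def K_def using sN
        by (simp add: field_simps)
    qed
    finally have "fail_prob k j V E (C' * ln (real (card V))) \<le> f N" using fb by linarith
    then show ?thesis using fail_le_1[OF G] N1 by (simp add: \<epsilon>_def N_def)
  qed
  show ?thesis
    by (intro exI[of _ C'] exI[of _ \<epsilon>] conjI C'pos eps01 eps0 allI impI) (use main in blast)
qed

end
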